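(* Let $n\ge 1$ and let $N$ be a fixed positive integer, and let $0<\alpha<N$. Let $\mu$ be a positive Radon measure on $\mathbb{R}^n$ satisfying the growth condition: there is a constant $C_\mu$ such that $\mu(B(x,r))\le C_\mu r^N$ for all $x\in\mathbb{R}^n$ and $r>0$. For a measurable function $f$ on $\mathbb{R}^n$ let $$I_\alpha f(x)=\int_{\mathbb{R}^n}\frac{f(y)\,d\mu(y)}{|x-y|^{N-\alpha}},\qquad M_\alpha f(x)=\sup_{r>0}\frac{1}{\mu(B(x,r))^{\frac{N-\alpha}{N}}}\int_{B(x,r)}|f(y)|\,d\mu(y).$$ Then there exist constants $k\ge 1$ and $C$ such that for every $\lambda>0$ and every $\epsilon$ with $0<\epsilon\le 1$, $$\mu\left(\{x: I_\alpha f(x)>k\lambda,\ M_\alpha f(x)\le \epsilon\lambda\}\right)\le C\,\epsilon^{\frac{N}{N-\alpha}}\,\mu\left(\{x: I_\alpha f(x)>\lambda\}\right).$$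
   Context: $B(x,r)$ denotes the open Euclidean ball of center $x$ and radius $r$, and $|x-y|$ is the Euclidean distance. $I_\alpha f$ is the Riesz potential of order $\alpha$ of $f$ with respect to $\mu$, and $M_\alpha f$ is the fractional maximal function of $f$ with respect to $\mu$. The measure $\mu$ need not be doubling. *)

theory Defs
  imports "HOL-Analysis.Analysis"
begin

text \<open>Riesz potential of order alpha (with exponent N) of a nonnegative function f
  with respect to mu; the kernel 1/|x-y|^(N-alpha) is taken in ennreal, so it is
  infinite on the diagonal.\<close>
definition riesz_potential ::
  "'a::euclidean_space measure \<Rightarrow> nat \<Rightarrow> real \<Rightarrow> ('a \<Rightarrow> real) \<Rightarrow> 'a \<Rightarrow> ennreal" where
  "riesz_potential \<mu> N \<alpha> f x =
     (\<integral>\<^sup>+ y. ennreal (f y) / ennreal (dist x y powr (real N - \<alpha>)) \<partial>\<mu>)"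

definition frac_maximal ::
  "'a::euclidean_space measure \<Rightarrow> nat \<Rightarrow> real \<Rightarrow> ('a \<Rightarrow> real) \<Rightarrow> 'a \<Rightarrow> ennreal" where
  "frac_maximal \<mu> N \<alpha> f x =
     (SUP r\<in>{0<..}. (\<integral>\<^sup>+ y\<in>ball x r. ennreal \<bar>f y\<bar> \<partial>\<mu>)
        / ennreal (measure \<mu> (ball x r) powr ((real N - \<alpha>) / real N)))"

end

theory Submission
  imports Defs
begin

locale growth =
  fixes \<mu> :: "'a::euclidean_space measure" and N :: nat and \<alpha> :: real and Cm :: real
  assumes N1: "N \<ge> 1" and apos: "0 < \<alpha>" and aN: "\<alpha> < real N"
    and sets_mu: "sets \<mu> = sets borel"
    and Cm_pos: "Cm > 0"
    and growth: "\<And>x r. r > 0 \<Longrightarrow> emeasure \<mu> (ball x r) \<le> ennreal (Cm * r ^ N)"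
begin

abbreviation "\<beta> \<equiv> real N - \<alpha>"

lemma beta_pos: "\<beta> > 0" using aN by simp

lemma space_mu: "space \<mu> = UNIV"
  using sets_eq_imp_space_eq[OF sets_mu] by simp

lemmas [measurable_cong] = sets_mu

lemma sets_open[measurable]: "open A \<Longrightarrow> A \<in> sets \<mu>"
  by (simp add: sets_mu)

lemma sets_borel_mu: "A \<in> sets borel \<Longrightarrow> A \<in> sets \<mu>"
  by (simp add: sets_mu)

lemma sets_ball[simp, measurable]: "ball x r \<in> sets \<mu>"
  by (simp add: sets_mu)

lemma sets_cball[simp, measurable]: "cball x r \<in> sets \<mu>"
  by (simp add: sets_mu)

lemma sets_compl[simp, measurable]: "A \<in> sets \<mu> \<Longrightarrow> - A \<in> sets \<mu>"
  by (metis sets.compl_sets Compl_eq_Diff_UNIV space_mu)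

lemma sets_UNIV[simp, measurable]: "UNIV \<in> sets \<mu>"
  by (metis sets.top space_mu)

lemma sets_single[simp, measurable]: "{x} \<in> sets \<mu>"
  by (simp add: sets_mu)

lemma fin_ball: "emeasure \<mu> (ball x r) < \<infinity>"
proof (cases "r > 0")
  case True
  then show ?thesis using growth[OF True, of x] by (simp add: le_less_trans)
next
  case False
  then have "ball x r = {}" by (simp add: ball_empty)
  then show ?thesis by (simp only:) simp
qed

lemma emeasure_ball_eq: "emeasure \<mu> (ball x r) = ennreal (measure \<mu> (ball x r))"
  using fin_ball[of x r] by (simp add: emeasure_eq_ennreal_measure less_top)

lemma ball_real: "r > 0 \<Longrightarrow> measure \<mu> (ball x r) \<le> Cm * r ^ N"
proof -
  assume r: "r > 0"
  have "ennreal (measure \<mu> (ball x r)) \<le> ennreal (Cm * r ^ N)"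
    using growth[OF r, of x] emeasure_ball_eq[of x r] by simp
  then show ?thesis using Cm_pos r by (subst (asm) ennreal_le_iff) auto
qed

lemma singleton_null: "emeasure \<mu> {x} = 0"
proof -
  have "measure \<mu> {x} \<le> e" if e: "e > 0" for e
  proof -
    define r where "r = min 1 (e / Cm)"
    have r: "r > 0" "r \<le> 1" "r \<le> e / Cm" using e Cm_pos by (auto simp: r_def)
    have "measure \<mu> {x} \<le> measure \<mu> (ball x r)"
      using r fin_ball by (intro measure_mono_fmeasurable) (auto simp: fmeasurable_def)
    also have "\<dots> \<le> Cm * r ^ N" by (rule ball_real[OF r(1)])
    also have "\<dots> \<le> Cm * r"
      proof -
      have "r ^ N \<le> r ^ 1" using r N1 by (intro power_decreasing) auto
      then show ?thesis using Cm_pos by simp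
    qed
    also have "\<dots> \<le> e" using r Cm_pos by (simp add: field_simps)
    finally show ?thesis .
  qed
  then have "measure \<mu> {x} \<le> 0" by (rule field_le_epsilon) simp
  then have "measure \<mu> {x} = 0" using measure_nonneg[of \<mu> "{x}"] by linarith
  moreover have "emeasure \<mu> {x} < \<infinity>"
  proof -
    have "emeasure \<mu> {x} \<le> emeasure \<mu> (ball x 1)" by (intro emeasure_mono) auto
    then show ?thesis using fin_ball[of x 1] by (rule le_less_trans)
  qed
  ultimately show ?thesis by (simp add: emeasure_eq_ennreal_measure)
qed

lemma sigma_fin: "sigma_finite_measure \<mu>"
proof
  show "\<exists>A. countable A \<and> A \<subseteq> sets \<mu> \<and> \<Union> A = space \<mu> \<and> (\<forall>a\<in>A. emeasure \<mu> a \<noteq> \<infinity>)"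
  proof (intro exI[of _ "range (\<lambda>n::nat. ball 0 (real n))"] conjI)
    have "x \<in> (\<Union>n. ball 0 (real n))" for x :: 'a
    proof -
      obtain n :: nat where "norm x < real n" using reals_Archimedean2 by blast
      then show ?thesis by auto
    qed
    then show "\<Union> (range (\<lambda>n::nat. ball 0 (real n))) = space \<mu>"
      by (auto simp: space_mu)
    show "countable (range (\<lambda>n::nat. ball 0 (real n)))" by simp
    show "range (\<lambda>n::nat. ball 0 (real n)) \<subseteq> sets \<mu>" by auto
    show "\<forall>a\<in>range (\<lambda>n::nat. ball 0 (real n)). emeasure \<mu> a \<noteq> \<infinity>"
      using fin_ball by (auto simp: less_top)
  qed
qed


interpretation S: sigma_finite_measure \<mu> by (rule sigma_fin)
interpretation P: pair_sigma_finite \<mu> \<mu> by (intro pair_sigma_finite.intro sigma_fin)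

definition kern :: "('a \<Rightarrow> real) \<Rightarrow> 'a \<Rightarrow> 'a \<Rightarrow> ennreal" where
  "kern f x y = ennreal (f y) / ennreal (dist x y powr \<beta>)"

lemma riesz_eq: "riesz_potential \<mu> N \<alpha> f x = (\<integral>\<^sup>+ y. kern f x y \<partial>\<mu>)"
  by (simp add: riesz_potential_def kern_def)

lemma pair_borel: "sets (\<mu> \<Otimes>\<^sub>M \<mu>) = sets (borel :: ('a \<times> 'a) measure)"
  by (metis sets_pair_measure_cong[OF sets_mu sets_mu] borel_prod)

lemma kern_meas_borel:
  assumes [measurable]: "f \<in> borel_measurable borel"
  shows "(\<lambda>z. kern f (fst z) (snd z)) \<in> borel_measurable borel"
proof -
  have fst: "(fst :: 'a \<times> 'a \<Rightarrow> 'a) \<in> borel_measurable borel"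
    by (intro borel_measurable_continuous_onI continuous_intros)
  have snd: "(snd :: 'a \<times> 'a \<Rightarrow> 'a) \<in> borel_measurable borel"
    by (intro borel_measurable_continuous_onI continuous_intros)
  have h1: "(\<lambda>z::'a\<times>'a. f (snd z)) \<in> borel_measurable borel"
    using measurable_compose[OF snd assms] by (simp add: comp_def)
  have h2: "(\<lambda>z::'a\<times>'a. dist (fst z) (snd z)) \<in> borel_measurable borel"
    using fst snd by (rule borel_measurable_dist)
  have h3: "(\<lambda>z::'a\<times>'a. dist (fst z) (snd z) powr \<beta>) \<in> borel_measurable borel"
    using h2 by measurable
  show ?thesis unfolding kern_def using h1 h3 by measurable
qed

lemma kern_meas[measurable]:
  assumes "f \<in> borel_measurable borel"
  shows "(\<lambda>z. kern f (fst z) (snd z)) \<in> borel_measurable (\<mu> \<Otimes>\<^sub>M \<mu>)"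
  using kern_meas_borel[OF assms] measurable_cong_sets[OF pair_borel refl] by blast

lemma kern_meas2[measurable]:
  assumes "f \<in> borel_measurable borel"
  shows "kern f x \<in> borel_measurable \<mu>"
  using measurable_Pair2[OF kern_meas[OF assms], of x] by (simp add: space_mu)

lemma I_meas[measurable]:
  assumes "f \<in> borel_measurable borel"
  shows "(\<lambda>x. \<integral>\<^sup>+ y. kern f x y \<partial>\<mu>) \<in> borel_measurable \<mu>"
  using S.borel_measurable_nn_integral[of "kern f" \<mu>] kern_meas[OF assms] by simp


lemma ennreal_term_le_suminf: "(f i :: ennreal) \<le> (\<Sum>n. f n)"
  using sum_le_suminf[OF summableI, of "{i}" f] by simp

lemma decomp_le:
  fixes g :: "'a \<Rightarrow> ennreal"
  assumes [measurable]: "g \<in> borel_measurable \<mu>" "A \<in> sets \<mu>" "\<And>i. S i \<in> sets \<mu>" "B \<in> sets \<mu>" "C \<in> sets \<mu>"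
  and cov: "\<And>y. y \<in> A \<or> (\<exists>i. y \<in> S i) \<or> y \<in> B \<or> y \<in> C"
  shows "(\<integral>\<^sup>+y. g y \<partial>\<mu>) \<le> (\<integral>\<^sup>+y. indicator A y * g y \<partial>\<mu>) + (\<Sum>i. \<integral>\<^sup>+y. indicator (S i) y * g y \<partial>\<mu>)
      + (\<integral>\<^sup>+y. indicator B y * g y \<partial>\<mu>) + (\<integral>\<^sup>+y. indicator C y * g y \<partial>\<mu>)"
proof -
  have pw: "g y \<le> indicator A y * g y + (\<Sum>i. indicator (S i) y * g y) + indicator B y * g y + indicator C y * g y" for y
  proof -
    consider "y \<in> A" | i where "y \<in> S i" | "y \<in> B" | "y \<in> C" using cov[of y] by blast
    then show ?thesis
    proof cases
      case 1 then show ?thesis by (simp add: add.assoc)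
    next
      case 2
      then have "g y \<le> (\<Sum>i. indicator (S i) y * g y)"
        using ennreal_term_le_suminf[of "\<lambda>i. indicator (S i) y * g y" i] by simp
      also have "\<dots> \<le> indicator A y * g y + (\<Sum>i. indicator (S i) y * g y)" by (rule add_increasing) auto
      also have "\<dots> \<le> indicator A y * g y + (\<Sum>i. indicator (S i) y * g y) + indicator B y * g y" by (rule add_increasing2) auto
      also have "\<dots> \<le> indicator A y * g y + (\<Sum>i. indicator (S i) y * g y) + indicator B y * g y + indicator C y * g y" by (rule add_increasing2) auto
      finally show ?thesis .
    next
      case 3 then show ?thesis by (simp add: add.commute add.left_commute)
    next
      case 4 then show ?thesis by (simp add: add.commute add.left_commute)
    qed
  qed
  have "(\<integral>\<^sup>+y. g y \<partial>\<mu>) \<le> (\<integral>\<^sup>+y. indicator A y * g y + (\<Sum>i. indicator (S i) y * g y) + indicator B y * g y + indicator C y * g y \<partial>\<mu>)"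
    by (intro nn_integral_mono pw)
  also have "\<dots> = (\<integral>\<^sup>+y. indicator A y * g y \<partial>\<mu>) + (\<integral>\<^sup>+y. (\<Sum>i. indicator (S i) y * g y) \<partial>\<mu>)
      + (\<integral>\<^sup>+y. indicator B y * g y \<partial>\<mu>) + (\<integral>\<^sup>+y. indicator C y * g y \<partial>\<mu>)"
    by (simp add: nn_integral_add)
  also have "(\<integral>\<^sup>+y. (\<Sum>i. indicator (S i) y * g y) \<partial>\<mu>) = (\<Sum>i. \<integral>\<^sup>+y. indicator (S i) y * g y \<partial>\<mu>)"
    by (rule nn_integral_suminf) measurable
  finally show ?thesis .
qed

lemma shell_exists:
  fixes d r0 q :: real
  assumes "0 < d" "d < r0" "0 < q" "q < 1"
  shows "\<exists>i. r0 * q ^ Suc i \<le> d \<and> d < r0 * q ^ i"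
proof -
  have r0: "r0 > 0" using assms by linarith
  obtain n where n: "q ^ n < d / r0" using real_arch_pow_inv[of "d / r0" q] assms r0 by auto
  then have "r0 * q ^ n \<le> d" using r0 by (simp add: field_simps)
  moreover have "r0 * q ^ Suc n \<le> r0 * q ^ n" using assms r0
    by (intro mult_left_mono power_decreasing) auto
  ultimately have "r0 * q ^ Suc n \<le> d" by linarith
  then have ex: "\<exists>i. r0 * q ^ Suc i \<le> d" by blast
  define i where "i = (LEAST i. r0 * q ^ Suc i \<le> d)"
  have i1: "r0 * q ^ Suc i \<le> d" unfolding i_def by (rule LeastI_ex[OF ex])
  have i2: "d < r0 * q ^ i"
  proof (cases i)
    case 0 then show ?thesis using assms by simp
  next
    case (Suc k)
    then have "k < i" by simp
    then have "\<not> r0 * q ^ Suc k \<le> d" unfolding i_def by (rule not_less_Least)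
    then show ?thesis using Suc by simp
  qed
  show ?thesis using i1 i2 by blast
qed


lemma kern_le_const:
  assumes "0 < a" "a \<le> dist x y" "0 \<le> f y"
  shows "kern f x y \<le> ennreal (f y * a powr (-\<beta>))"
proof -
  have dpos: "dist x y > 0" using assms by linarith
  then have d: "dist x y powr \<beta> > 0" by simp
  have "kern f x y = ennreal (f y / dist x y powr \<beta>)"
    unfolding kern_def by (rule divide_ennreal[OF assms(3) d])
  also have "f y / dist x y powr \<beta> \<le> f y * a powr (-\<beta>)"
  proof -
    have "a powr \<beta> \<le> dist x y powr \<beta>" using assms beta_pos by (intro powr_mono2) auto
    moreover have "a powr \<beta> > 0" using assms by simp
    moreover have "0 < dist x y powr \<beta> * a powr \<beta>" using d \<open>a powr \<beta> > 0\<close> by simp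
    ultimately have "f y / dist x y powr \<beta> \<le> f y / a powr \<beta>"
      using assms by (intro divide_left_mono) auto
    then show ?thesis using powr_minus_divide[of a \<beta>] by simp
  qed
  then have "ennreal (f y / dist x y powr \<beta>) \<le> ennreal (f y * a powr (-\<beta>))"
    by (rule ennreal_leI)
  finally show ?thesis .
qed

lemma shell_calc: "u > 0 \<Longrightarrow> q > 0 \<Longrightarrow> (u * q) powr (-\<beta>) * u powr real N = q powr (-\<beta>) * u powr \<alpha>"
proof -
  assume u: "u > 0" and q: "q > 0"
  have "u powr real N = u powr \<beta> * u powr \<alpha>" by (simp flip: powr_add)
  moreover have "(u * q) powr (-\<beta>) = u powr (-\<beta>) * q powr (-\<beta>)" by (simp add: powr_mult)
  moreover have "u powr (-\<beta>) * u powr \<beta> = 1" using u by (simp flip: powr_add)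
  ultimately show ?thesis by (metis (no_types, lifting) mult.assoc mult.commute mult.left_neutral)
qed

lemma half_pow_powr: "(\<delta> * (1/2::real) ^ i) powr \<alpha> = \<delta> powr \<alpha> * (2 powr (-\<alpha>)) ^ i"
proof -
  have "((1/2::real) ^ i) powr \<alpha> = ((1/2::real) powr \<alpha>) ^ i"
    by (simp add: powr_power powr_powr flip: powr_realpow) (simp add: mult.commute)
  also have "(1/2::real) powr \<alpha> = 2 powr (-\<alpha>)" by (simp add: powr_divide powr_minus_divide)
  finally show ?thesis by (simp add: powr_mult)
qed

lemma null_single: "{x} \<in> null_sets \<mu>"
  using singleton_null by (simp add: null_sets_def)

definition "CL = Cm * 2 powr \<beta> / (1 - 2 powr (-\<alpha>))"

lemma CL_pos: "CL > 0"
proof -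
  have "2 powr (-\<alpha>) < (1::real)" using apos by (simp add: powr_less_one)
  then show ?thesis using Cm_pos by (simp add: CL_def)
qed

lemma growth_int:
  assumes dl: "\<delta> > 0"
  shows "(\<integral>\<^sup>+x. indicator (ball y \<delta>) x * kern (\<lambda>_. 1) x y \<partial>\<mu>) \<le> ennreal (CL * \<delta> powr \<alpha>)"
proof -
  define h where "h x = indicator (ball y \<delta>) x * kern (\<lambda>_. 1) x y" for x
  define S where "S i = ball y (\<delta> * (1/2) ^ i) - ball y (\<delta> * (1/2) ^ Suc i)" for i :: nat
  have hm: "h \<in> borel_measurable \<mu>"
  proof -
    have "(\<lambda>x. kern (\<lambda>_. 1) x y) \<in> borel_measurable \<mu>"
      using measurable_Pair1[OF kern_meas[of "\<lambda>_. 1"], of y] by (simp add: space_mu)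
    then show ?thesis unfolding h_def by measurable
  qed
  have Sm: "S i \<in> sets \<mu>" for i unfolding S_def by auto
  have cov: "x \<in> {y} \<or> (\<exists>i. x \<in> S i) \<or> x \<in> {} \<or> x \<in> - ball y \<delta>" for x
  proof (cases "x = y \<or> dist y x \<ge> \<delta>")
    case True then show ?thesis by auto
  next
    case False
    then have "0 < dist y x" "dist y x < \<delta>" by auto
    from shell_exists[OF this, of "1/2"] obtain i where
      "\<delta> * (1/2) ^ Suc i \<le> dist y x" "dist y x < \<delta> * (1/2) ^ i" by auto
    then have "x \<in> S i" unfolding S_def by auto
    then show ?thesis by blast
  qed
  have "(\<integral>\<^sup>+x. h x \<partial>\<mu>) \<le> (\<integral>\<^sup>+x. indicator {y} x * h x \<partial>\<mu>) + (\<Sum>i. \<integral>\<^sup>+x. indicator (S i) x * h x \<partial>\<mu>)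
      + (\<integral>\<^sup>+x. indicator {} x * h x \<partial>\<mu>) + (\<integral>\<^sup>+x. indicator (- ball y \<delta>) x * h x \<partial>\<mu>)"
    by (rule decomp_le[OF hm _ Sm]) (use cov in auto)
  also have "(\<integral>\<^sup>+x. indicator {y} x * h x \<partial>\<mu>) = 0"
    using nn_integral_null_set[OF null_single[of y], of h] by (simp add: mult.commute)
  also have "(\<integral>\<^sup>+x. indicator (- ball y \<delta>) x * h x \<partial>\<mu>) = 0"
  proof -
    have "(\<integral>\<^sup>+x. indicator (- ball y \<delta>) x * h x \<partial>\<mu>) = (\<integral>\<^sup>+x. 0 \<partial>\<mu>)"
      by (intro nn_integral_cong) (auto simp: h_def indicator_def)
    then show ?thesis by simp
  qed
  also have "(\<integral>\<^sup>+x. indicator {} x * h x \<partial>\<mu>) = 0" by simp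
  also have "(\<Sum>i. \<integral>\<^sup>+x. indicator (S i) x * h x \<partial>\<mu>) \<le> (\<Sum>i. ennreal (Cm * 2 powr \<beta> * \<delta> powr \<alpha> * (2 powr (-\<alpha>)) ^ i))"
  proof (rule suminf_le)
    fix i
    define u where "u = \<delta> * (1/2::real) ^ i"
    have u: "u > 0" using dl by (simp add: u_def)
    define c where "c = (u * (1/2)) powr (-\<beta>)"
    have "(\<integral>\<^sup>+x. indicator (S i) x * h x \<partial>\<mu>) \<le> (\<integral>\<^sup>+x. ennreal c * indicator (S i) x \<partial>\<mu>)"
    proof (intro nn_integral_mono)
      fix x
      show "indicator (S i) x * h x \<le> ennreal c * indicator (S i) x"
      proof (cases "x \<in> S i")
        case True
        then have x1: "u * (1/2) \<le> dist x y" "dist y x < u" by (auto simp: S_def u_def dist_commute)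
        have "u \<le> \<delta>" using dl by (simp add: u_def power_le_one mult_left_le)
        then have "x \<in> ball y \<delta>" using x1 by auto
        then have "h x = kern (\<lambda>_. 1) x y" by (simp add: h_def)
        also have "\<dots> \<le> ennreal (1 * (u * (1/2)) powr (-\<beta>))"
          by (rule kern_le_const) (use x1 u in auto)
        finally show ?thesis using True by (simp add: c_def)
      qed simp
    qed
    also have "\<dots> = ennreal c * emeasure \<mu> (S i)" using Sm by (simp add: nn_integral_cmult_indicator)
    also have "\<dots> \<le> ennreal c * ennreal (Cm * u ^ N)"
    proof (intro mult_left_mono)
      have "emeasure \<mu> (S i) \<le> emeasure \<mu> (ball y u)" unfolding S_def u_def by (intro emeasure_mono) auto
      also have "\<dots> \<le> ennreal (Cm * u ^ N)" by (rule growth[OF u])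
      finally show "emeasure \<mu> (S i) \<le> ennreal (Cm * u ^ N)" .
    qed simp
    also have "\<dots> = ennreal (c * (Cm * u ^ N))" using Cm_pos u by (simp add: ennreal_mult c_def)
    also have "c * (Cm * u ^ N) = Cm * 2 powr \<beta> * \<delta> powr \<alpha> * (2 powr (-\<alpha>)) ^ i"
    proof -
      have "c * u ^ N = (u * (1/2)) powr (-\<beta>) * u powr real N" using u by (simp add: c_def powr_realpow)
      also have "\<dots> = (1/2) powr (-\<beta>) * u powr \<alpha>" using u by (rule shell_calc) simp
      also have "(1/2::real) powr (-\<beta>) = 2 powr \<beta>" using powr_minus_divide[of 2 \<beta>] by (simp add: powr_divide)
      also have "u powr \<alpha> = \<delta> powr \<alpha> * (2 powr (-\<alpha>)) ^ i" unfolding u_def by (rule half_pow_powr)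
      finally show ?thesis by (simp add: algebra_simps)
    qed
    finally show "(\<integral>\<^sup>+x. indicator (S i) x * h x \<partial>\<mu>) \<le> ennreal (Cm * 2 powr \<beta> * \<delta> powr \<alpha> * (2 powr (-\<alpha>)) ^ i)" .
  qed (rule summableI)+
  also have "(\<Sum>i. ennreal (Cm * 2 powr \<beta> * \<delta> powr \<alpha> * (2 powr (-\<alpha>)) ^ i)) = ennreal (CL * \<delta> powr \<alpha>)"
  proof -
    have q: "2 powr (-\<alpha>) < (1::real)" using apos by (simp add: powr_less_one)
    have sm: "summable (\<lambda>i. Cm * 2 powr \<beta> * \<delta> powr \<alpha> * (2 powr (-\<alpha>)) ^ i)"
      using q by (intro summable_mult summable_geometric) simp
    have "(\<Sum>i. ennreal (Cm * 2 powr \<beta> * \<delta> powr \<alpha> * (2 powr (-\<alpha>)) ^ i)) = ennreal (\<Sum>i. Cm * 2 powr \<beta> * \<delta> powr \<alpha> * (2 powr (-\<alpha>)) ^ i)"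
      using Cm_pos by (intro suminf_ennreal2 sm) simp
    also have "(\<Sum>i. Cm * 2 powr \<beta> * \<delta> powr \<alpha> * (2 powr (-\<alpha>)) ^ i) = Cm * 2 powr \<beta> * \<delta> powr \<alpha> * (1 / (1 - 2 powr (-\<alpha>)))"
      using q by (subst suminf_mult) (auto intro: summable_geometric simp: suminf_geometric)
    finally show ?thesis by (simp add: CL_def)
  qed
  finally show ?thesis by (simp add: h_def)
qed


lemma pair_meas_borel: "h \<in> borel_measurable borel \<Longrightarrow> h \<in> borel_measurable (\<mu> \<Otimes>\<^sub>M \<mu>)"
  using measurable_cong_sets[OF pair_borel refl] by blast

lemma ind_ball_pair_meas: "(\<lambda>z. indicator (ball (fst z) \<delta>) (snd z) :: ennreal) \<in> borel_measurable (\<mu> \<Otimes>\<^sub>M \<mu>)"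
proof -
  have o: "open {z::'a\<times>'a. dist (fst z) (snd z) < \<delta>}"
    by (intro open_Collect_less continuous_intros)
  have "(\<lambda>z. indicator {z::'a\<times>'a. dist (fst z) (snd z) < \<delta>} z :: ennreal) \<in> borel_measurable borel"
    using o by (intro borel_measurable_indicator) auto
  moreover have "(\<lambda>z. indicator (ball (fst z) \<delta>) (snd z) :: ennreal) = (\<lambda>z. indicator {z::'a\<times>'a. dist (fst z) (snd z) < \<delta>} z)"
    by (auto simp: indicator_def fun_eq_iff)
  ultimately show ?thesis using pair_meas_borel by simp
qed

definition "CW = 2 powr (real N / \<beta>) * CL"

lemma I_zero_if_int_zero:
  assumes g: "g \<in> borel_measurable borel" and "(\<integral>\<^sup>+y. ennreal (g y) \<partial>\<mu>) = 0"
  shows "(\<integral>\<^sup>+y. kern g x y \<partial>\<mu>) = 0"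
proof -
  have gm: "(\<lambda>y. ennreal (g y)) \<in> borel_measurable \<mu>" using g by measurable
  have "AE y in \<mu>. ennreal (g y) = 0" using assms(2) nn_integral_0_iff_AE[OF gm] by simp
  then have "AE y in \<mu>. kern g x y = 0" by eventually_elim (simp add: kern_def)
  then have "(\<integral>\<^sup>+y. kern g x y \<partial>\<mu>) = (\<integral>\<^sup>+y. 0 \<partial>\<mu>)" by (intro nn_integral_cong_AE) auto
  then show ?thesis by simp
qed

lemma weak_type:
  assumes g[measurable]: "g \<in> borel_measurable borel" and gnn: "\<And>y. g y \<ge> 0"
    and A: "(\<integral>\<^sup>+y. ennreal (g y) \<partial>\<mu>) \<le> ennreal A" and s: "s > 0"
  shows "emeasure \<mu> {x. (\<integral>\<^sup>+y. kern g x y \<partial>\<mu>) > ennreal s} \<le> ennreal (CW * (A / s) powr (real N / \<beta>))"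
proof (cases "(\<integral>\<^sup>+y. ennreal (g y) \<partial>\<mu>) = 0")
  case True
  then have "{x. (\<integral>\<^sup>+y. kern g x y \<partial>\<mu>) > ennreal s} = {}"
    using I_zero_if_int_zero[OF g True] by simp
  then show ?thesis by simp
next
  case False
  then have "0 < ennreal A" using A by (metis gr_zeroI order_le_less_trans zero_less_iff_neq_zero not_le le_zero_eq)
  then have Apos: "A > 0" by (simp add: ennreal_less_zero_iff)
  define \<delta> where "\<delta> = (2 * A / s) powr (1 / \<beta>)"
  have dpos: "\<delta> > 0" using Apos s by (simp add: \<delta>_def)
  have dpow: "\<delta> powr \<beta> = 2 * A / s" using Apos s beta_pos by (simp add: \<delta>_def powr_powr)
  have dminus: "\<delta> powr (-\<beta>) * A = s / 2"
    using dpow Apos s powr_minus_divide[of \<delta> \<beta>] by simp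
  define J where "J x = (\<integral>\<^sup>+y. indicator (ball x \<delta>) y * kern g x y \<partial>\<mu>)" for x
  have Jm: "J \<in> borel_measurable \<mu>"
  proof -
    have "(\<lambda>z. indicator (ball (fst z) \<delta>) (snd z) * kern g (fst z) (snd z)) \<in> borel_measurable (\<mu> \<Otimes>\<^sub>M \<mu>)"
      using ind_ball_pair_meas kern_meas[OF g] by measurable
    then show ?thesis unfolding J_def using S.borel_measurable_nn_integral[of "\<lambda>x y. indicator (ball x \<delta>) y * kern g x y" \<mu>]
      by simp
  qed
  have Ibound: "(\<integral>\<^sup>+y. kern g x y \<partial>\<mu>) \<le> J x + ennreal (s / 2)" for x
  proof -
    have "(\<integral>\<^sup>+y. kern g x y \<partial>\<mu>) \<le> (\<integral>\<^sup>+y. indicator (ball x \<delta>) y * kern g x y + ennreal (\<delta> powr (-\<beta>)) * ennreal (g y) \<partial>\<mu>)"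
    proof (intro nn_integral_mono)
      fix y
      show "kern g x y \<le> indicator (ball x \<delta>) y * kern g x y + ennreal (\<delta> powr (-\<beta>)) * ennreal (g y)"
      proof (cases "y \<in> ball x \<delta>")
        case False
        then have "kern g x y \<le> ennreal (g y * \<delta> powr (-\<beta>))"
          using dpos gnn by (intro kern_le_const) auto
        then show ?thesis using False gnn by (simp add: ennreal_mult mult.commute)
      qed simp
    qed
    also have "\<dots> = J x + ennreal (\<delta> powr (-\<beta>)) * (\<integral>\<^sup>+y. ennreal (g y) \<partial>\<mu>)"
      unfolding J_def by (subst nn_integral_add) (auto simp: nn_integral_cmult)
    also have "\<dots> \<le> J x + ennreal (\<delta> powr (-\<beta>)) * ennreal A"
      using A by (intro add_left_mono mult_left_mono) auto
    also have "ennreal (\<delta> powr (-\<beta>)) * ennreal A = ennreal (s / 2)"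
      using ennreal_mult[of "\<delta> powr (-\<beta>)" A] dminus Apos by (metis powr_ge_zero less_imp_le)
    finally show ?thesis .
  qed
  have sub: "{x. (\<integral>\<^sup>+y. kern g x y \<partial>\<mu>) > ennreal s} \<subseteq> {x \<in> space \<mu>. 1 \<le> ennreal (2 / s) * J x}"
  proof safe
    fix x assume "ennreal s < (\<integral>\<^sup>+y. kern g x y \<partial>\<mu>)"
    then have "ennreal s < J x + ennreal (s / 2)" using Ibound[of x] by (rule less_le_trans)
    then have "ennreal (s / 2) \<le> J x"
    proof -
      assume h: "ennreal s < J x + ennreal (s / 2)"
      show ?thesis
      proof (rule ccontr)
        assume "\<not> ennreal (s / 2) \<le> J x"
        then have "J x \<le> ennreal (s / 2)" by simp
        then have "J x + ennreal (s / 2) \<le> ennreal (s / 2) + ennreal (s / 2)" by (rule add_right_mono)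
        also have "\<dots> = ennreal s" using s by (simp flip: ennreal_plus)
        finally show False using h by simp
      qed
    qed
    then have "ennreal (2 / s) * ennreal (s / 2) \<le> ennreal (2 / s) * J x" by (rule mult_left_mono) simp
    moreover have "ennreal (2 / s) * ennreal (s / 2) = 1" using s by (simp flip: ennreal_mult)
    ultimately show "1 \<le> ennreal (2 / s) * J x" by simp
  qed (simp add: space_mu)
  have "emeasure \<mu> {x. (\<integral>\<^sup>+y. kern g x y \<partial>\<mu>) > ennreal s} \<le> emeasure \<mu> {x \<in> space \<mu>. 1 \<le> ennreal (2 / s) * J x}"
    using sub Jm by (intro emeasure_mono) auto
  also have "\<dots> \<le> ennreal (2 / s) * (\<integral>\<^sup>+ x. J x * indicator (space \<mu>) x \<partial>\<mu>)"
    using Jm by (intro nn_integral_Markov_inequality) auto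
  also have "(\<integral>\<^sup>+ x. J x * indicator (space \<mu>) x \<partial>\<mu>) = (\<integral>\<^sup>+ x. J x \<partial>\<mu>)"
    by (simp add: space_mu)
  also have "(\<integral>\<^sup>+ x. J x \<partial>\<mu>) = (\<integral>\<^sup>+ y. (\<integral>\<^sup>+ x. indicator (ball x \<delta>) y * kern g x y \<partial>\<mu>) \<partial>\<mu>)"
    unfolding J_def
  proof (rule P.Fubini'[symmetric])
    show "(\<lambda>(x, y). indicator (ball x \<delta>) y * kern g x y) \<in> borel_measurable (\<mu> \<Otimes>\<^sub>M \<mu>)"
      using ind_ball_pair_meas kern_meas[OF g] by (simp add: case_prod_beta') measurable
  qed
  also have "\<dots> = (\<integral>\<^sup>+ y. ennreal (g y) * (\<integral>\<^sup>+ x. indicator (ball y \<delta>) x * kern (\<lambda>_. 1) x y \<partial>\<mu>) \<partial>\<mu>)"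
  proof (intro nn_integral_cong)
    fix y
    have m1: "(\<lambda>x. indicator (ball y \<delta>) x * kern (\<lambda>_. 1) x y) \<in> borel_measurable \<mu>"
      using measurable_Pair1[OF kern_meas[of "\<lambda>_. 1"], of y] by (simp add: space_mu)
    have "(\<integral>\<^sup>+ x. indicator (ball x \<delta>) y * kern g x y \<partial>\<mu>) = (\<integral>\<^sup>+ x. ennreal (g y) * (indicator (ball y \<delta>) x * kern (\<lambda>_. 1) x y) \<partial>\<mu>)"
      by (intro nn_integral_cong) (auto simp: kern_def indicator_def dist_commute divide_ennreal_def)
    also have "\<dots> = ennreal (g y) * (\<integral>\<^sup>+ x. indicator (ball y \<delta>) x * kern (\<lambda>_. 1) x y \<partial>\<mu>)"
      using m1 by (rule nn_integral_cmult)
    finally show "(\<integral>\<^sup>+ x. indicator (ball x \<delta>) y * kern g x y \<partial>\<mu>) = ennreal (g y) * (\<integral>\<^sup>+ x. indicator (ball y \<delta>) x * kern (\<lambda>_. 1) x y \<partial>\<mu>)" .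
  qed
  also have "\<dots> \<le> (\<integral>\<^sup>+ y. ennreal (g y) * ennreal (CL * \<delta> powr \<alpha>) \<partial>\<mu>)"
    by (intro nn_integral_mono mult_left_mono growth_int dpos) auto
  also have "\<dots> = ennreal (CL * \<delta> powr \<alpha>) * (\<integral>\<^sup>+ y. ennreal (g y) \<partial>\<mu>)"
    by (subst nn_integral_multc) (auto simp: mult.commute)
  also have "ennreal (2 / s) * (ennreal (CL * \<delta> powr \<alpha>) * (\<integral>\<^sup>+ y. ennreal (g y) \<partial>\<mu>)) \<le> ennreal (2 / s) * (ennreal (CL * \<delta> powr \<alpha>) * ennreal A)"
    using A by (intro mult_left_mono) auto
  also have "\<dots> = ennreal (2 / s * (CL * \<delta> powr \<alpha> * A))"
  proof -
    have n1: "0 \<le> CL * \<delta> powr \<alpha>" using CL_pos by simp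
    have n2: "0 \<le> 2 / s" using s by simp
    have n3: "0 \<le> CL * \<delta> powr \<alpha> * A" using CL_pos Apos by simp
    show ?thesis
      by (simp only: ennreal_mult[OF n1 less_imp_le[OF Apos], symmetric] ennreal_mult[OF n2 n3, symmetric])
  qed
  also have "2 / s * (CL * \<delta> powr \<alpha> * A) = CW * (A / s) powr (real N / \<beta>)"
  proof -
    have "\<delta> powr \<alpha> = (2 * (A / s)) powr (\<alpha> / \<beta>)" by (simp add: \<delta>_def powr_powr)
    also have "\<dots> = 2 powr (\<alpha> / \<beta>) * (A / s) powr (\<alpha> / \<beta>)" by (rule powr_mult)
    finally have d: "\<delta> powr \<alpha> = 2 powr (\<alpha> / \<beta>) * (A / s) powr (\<alpha> / \<beta>)" .
    have e: "real N / \<beta> = 1 + \<alpha> / \<beta>" using beta_pos by (simp add: field_simps)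
    have "2 / s * (CL * \<delta> powr \<alpha> * A) = CL * (2 * 2 powr (\<alpha> / \<beta>)) * ((A / s) * (A / s) powr (\<alpha> / \<beta>))"
      using d by (simp add: field_simps)
    also have "2 * 2 powr (\<alpha> / \<beta>) = 2 powr (real N / \<beta>)" using e by (simp add: powr_add)
    also have "(A / s) * (A / s) powr (\<alpha> / \<beta>) = (A / s) powr (real N / \<beta>)" using e Apos s by (simp add: powr_add)
    finally show ?thesis by (simp add: CW_def)
  qed
  finally show ?thesis by (metis mult_left_mono zero_le)
qed


lemma closed_sublevel:
  assumes f[measurable]: "f \<in> borel_measurable borel" and fnn: "\<And>y. f y \<ge> 0"
  shows "closed {x. (\<integral>\<^sup>+y. kern f x y \<partial>\<mu>) \<le> c}"
  unfolding closed_sequential_limits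
proof (intro allI impI, elim conjE)
  fix xs :: "nat \<Rightarrow> 'a" and l
  assume xs: "\<forall>n. xs n \<in> {x. (\<integral>\<^sup>+y. kern f x y \<partial>\<mu>) \<le> c}" and lim: "xs \<longlonglongrightarrow> l"
  have conv: "liminf (\<lambda>n. kern f (xs n) y) = kern f l y" if y: "y \<noteq> l" for y
  proof -
    have dl: "dist l y > 0" using y by simp
    have t1: "(\<lambda>n. dist (xs n) y) \<longlonglongrightarrow> dist l y" using lim by (intro tendsto_intros) auto
    have ev: "eventually (\<lambda>n. dist (xs n) y > 0) sequentially"
      using order_tendstoD(1)[OF t1 dl] .
    have t2: "(\<lambda>n. ennreal (f y / dist (xs n) y powr \<beta>)) \<longlonglongrightarrow> ennreal (f y / dist l y powr \<beta>)"
      using t1 dl lim by (intro tendsto_ennrealI tendsto_intros) auto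
    have kl: "kern f l y = ennreal (f y / dist l y powr \<beta>)"
      unfolding kern_def using dl fnn by (intro divide_ennreal) auto
    have "(\<lambda>n. kern f (xs n) y) \<longlonglongrightarrow> kern f l y" unfolding kl
    proof (rule Lim_transform_eventually[OF t2])
      show "\<forall>\<^sub>F n in sequentially. ennreal (f y / dist (xs n) y powr \<beta>) = kern f (xs n) y"
        using ev by eventually_elim (simp add: kern_def divide_ennreal fnn)
    qed
    then show ?thesis by (intro lim_imp_Liminf) auto
  qed
  have "(\<integral>\<^sup>+y. kern f l y \<partial>\<mu>) = (\<integral>\<^sup>+y. liminf (\<lambda>n. kern f (xs n) y) \<partial>\<mu>)"
  proof (rule nn_integral_cong_AE)
    show "AE y in \<mu>. kern f l y = liminf (\<lambda>n. kern f (xs n) y)"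
    proof (rule AE_I'[OF null_single[of l]])
      show "{y \<in> space \<mu>. kern f l y \<noteq> liminf (\<lambda>n. kern f (xs n) y)} \<subseteq> {l}"
        using conv by force
    qed
  qed
  also have "\<dots> \<le> liminf (\<lambda>n. (\<integral>\<^sup>+y. kern f (xs n) y \<partial>\<mu>))"
    by (rule nn_integral_liminf) measurable
  also have "\<dots> \<le> c" using xs by (intro Liminf_le) auto
  finally show "l \<in> {x. (\<integral>\<^sup>+y. kern f x y \<partial>\<mu>) \<le> c}" by simp
qed


abbreviation "\<gamma> \<equiv> \<beta> / real N"
definition "Kd = (100::real) ^ N"
definition "qq = (1/10::real) powr \<beta>"

lemma Kd_pos: "Kd > 0" by (simp add: Kd_def)
lemma Kd_ge1: "Kd \<ge> 1" by (simp add: Kd_def)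
lemma Kd_powr: "Kd powr \<gamma> = 100 powr \<beta>"
proof -
  have "Kd powr \<gamma> = (100 powr real N) powr \<gamma>" by (simp add: Kd_def powr_realpow)
  also have "\<dots> = 100 powr \<beta>" using N1 by (simp add: powr_powr)
  finally show ?thesis .
qed
lemma qq_pos: "qq > 0" by (simp add: qq_def)
lemma qq_less1: "qq < 1"
proof -
  have "1 < (10::real) powr \<beta>" using beta_pos by (intro gr_one_powr) auto
  then show ?thesis by (simp add: qq_def powr_divide)
qed

lemma Tstep:
  assumes r: "0 < r" and m1: "0 \<le> m1" and bad: "Kd * m1 < m0"
  shows "(r/10) powr (-\<beta>) * m1 powr \<gamma> \<le> qq * (r powr (-\<beta>) * m0 powr \<gamma>)"
proof -
  have g: "\<gamma> \<ge> 0" using beta_pos by simp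
  have "m1 \<le> m0 / Kd" using bad Kd_pos by (simp add: field_simps)
  then have "m1 powr \<gamma> \<le> (m0 / Kd) powr \<gamma>" using m1 g by (intro powr_mono2) auto
  also have "\<dots> = m0 powr \<gamma> / 100 powr \<beta>" by (simp add: powr_divide Kd_powr)
  finally have a: "m1 powr \<gamma> \<le> m0 powr \<gamma> / 100 powr \<beta>" .
  have b: "(r/10) powr (-\<beta>) = r powr (-\<beta>) * 10 powr \<beta>"
    using powr_minus_divide[of 10 \<beta>] by (simp add: powr_divide)
  have c: "qq = 10 powr \<beta> / 100 powr \<beta>"
  proof -
    have "(1/10::real) = 10 / 100" by simp
    then show ?thesis unfolding qq_def by (simp only: powr_divide)
  qed
  have "(r/10) powr (-\<beta>) * m1 powr \<gamma> \<le> (r/10) powr (-\<beta>) * (m0 powr \<gamma> / 100 powr \<beta>)"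
    using a by (intro mult_left_mono) auto
  also have "\<dots> = qq * (r powr (-\<beta>) * m0 powr \<gamma>)" unfolding b c by simp
  finally show ?thesis .
qed

lemma max_ball:
  assumes M: "frac_maximal \<mu> N \<alpha> f x \<le> ennreal c" and rho: "\<rho> > 0" and c: "c \<ge> 0"
    and fnn: "\<And>y. f y \<ge> 0"
  shows "(\<integral>\<^sup>+y. indicator (ball x \<rho>) y * ennreal (f y) \<partial>\<mu>) \<le> ennreal (c * measure \<mu> (ball x \<rho>) powr \<gamma>)"
proof -
  define a where "a = (\<integral>\<^sup>+y\<in>ball x \<rho>. ennreal \<bar>f y\<bar> \<partial>\<mu>)"
  define m where "m = measure \<mu> (ball x \<rho>)"
  have aeq: "(\<integral>\<^sup>+y. indicator (ball x \<rho>) y * ennreal (f y) \<partial>\<mu>) = a"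
    unfolding a_def using fnn by (intro nn_integral_cong) (auto simp: mult.commute)
  have "a / ennreal (m powr \<gamma>) \<le> frac_maximal \<mu> N \<alpha> f x"
    unfolding frac_maximal_def a_def m_def using rho by (intro SUP_upper) auto
  then have le: "a / ennreal (m powr \<gamma>) \<le> ennreal c" using M by (rule order_trans)
  show ?thesis
  proof (cases "m = 0")
    case True
    then have "emeasure \<mu> (ball x \<rho>) = 0" by (simp add: m_def emeasure_ball_eq)
    then have "ball x \<rho> \<in> null_sets \<mu>" by (simp add: null_sets_def)
    then have "a = 0" unfolding a_def by (rule nn_integral_null_set)
    then show ?thesis using aeq by simp
  next
    case False
    then have mpos: "m > 0" by (simp add: m_def order_le_neq_trans)
    have b0: "ennreal (m powr \<gamma>) \<noteq> 0" "ennreal (m powr \<gamma>) < top" using mpos by auto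
    have "a = a / ennreal (m powr \<gamma>) * ennreal (m powr \<gamma>)"
      using b0 by (simp add: ennreal_divide_times)
    also have "\<dots> \<le> ennreal c * ennreal (m powr \<gamma>)" using le by (rule mult_right_mono) simp
    also have "\<dots> = ennreal (c * m powr \<gamma>)" using c by (simp add: ennreal_mult)
    finally show ?thesis using aeq by (simp add: m_def)
  qed
qed

lemma kern_far:
  assumes "0 < dist x y" "dist z y \<le> c * dist x y" "c > 0" "f y \<ge> 0"
  shows "kern f x y \<le> ennreal (c powr \<beta>) * kern f z y"
proof (cases "dist z y = 0")
  case True
  show ?thesis
  proof (cases "f y = 0")
    case True then show ?thesis by (simp add: kern_def)
  next
    case False
    then have "kern f z y = top" using \<open>dist z y = 0\<close> assms(4) by (simp add: kern_def ennreal_divide_eq_top_iff)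
    then show ?thesis using assms(3) by (simp add: ennreal_mult_top)
  qed
next
  case False
  then have zpos: "dist z y > 0" by simp
  have e1: "kern f x y = ennreal (f y / dist x y powr \<beta>)"
    unfolding kern_def using assms by (intro divide_ennreal) auto
  have e2: "kern f z y = ennreal (f y / dist z y powr \<beta>)"
    unfolding kern_def using assms zpos by (intro divide_ennreal) auto
  have "dist z y powr \<beta> \<le> (c * dist x y) powr \<beta>" using assms beta_pos by (intro powr_mono2) auto
  also have "\<dots> = c powr \<beta> * dist x y powr \<beta>" using assms by (simp add: powr_mult)
  finally have h: "dist z y powr \<beta> \<le> c powr \<beta> * dist x y powr \<beta>" .
  have "f y / dist x y powr \<beta> \<le> c powr \<beta> * (f y / dist z y powr \<beta>)"
  proof -
    have "f y * dist z y powr \<beta> \<le> f y * (c powr \<beta> * dist x y powr \<beta>)"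
      using h assms by (intro mult_left_mono) auto
    then show ?thesis using assms zpos by (simp add: field_simps)
  qed
  then show ?thesis unfolding e1 e2 using assms by (simp add: ennreal_mult[symmetric] ennreal_leI)
qed


definition "Cg = Cm powr \<gamma>"
definition "CB = 3 powr \<beta> + Cg * 40 powr \<beta> + Cg * 20 powr \<beta> / (1 - qq)"
definition rr :: "real \<Rightarrow> nat \<Rightarrow> real" where "rr d i = d / 10 ^ Suc i"
definition "bad x d l \<longleftrightarrow> Kd * measure \<mu> (ball x (rr d (Suc l))) < measure \<mu> (ball x (rr d l))"
definition "TT x d i = (rr d (Suc i)) powr (-\<beta>) * measure \<mu> (ball x (rr d i)) powr \<gamma>"

lemma Cg_pos: "Cg > 0" using Cm_pos by (simp add: Cg_def)
lemma CB_pos: "CB > 0"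
  using Cg_pos qq_less1 by (simp add: CB_def add_pos_nonneg)

lemma rr_pos: "d > 0 \<Longrightarrow> rr d i > 0" by (simp add: rr_def)
lemma rr_Suc: "rr d (Suc i) = rr d i / 10" by (simp add: rr_def)
lemma rr_mono: "d > 0 \<Longrightarrow> i \<le> j \<Longrightarrow> rr d j \<le> rr d i"
  unfolding rr_def by (intro divide_left_mono power_increasing) auto

lemma ball_powr_bound:
  assumes "r > 0"
  shows "measure \<mu> (ball x r) powr \<gamma> \<le> Cg * r powr \<beta>"
proof -
  have g: "\<gamma> \<ge> 0" using beta_pos by simp
  have "measure \<mu> (ball x r) powr \<gamma> \<le> (Cm * r ^ N) powr \<gamma>"
    using ball_real[OF assms] g by (intro powr_mono2) auto
  also have "\<dots> = Cg * (r powr real N) powr \<gamma>" using assms by (simp add: powr_mult Cg_def powr_realpow)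
  also have "(r powr real N) powr \<gamma> = r powr \<beta>" using N1 by (simp add: powr_powr)
  finally show ?thesis .
qed

lemma TT_bound:
  assumes d: "d > 0" and b: "\<forall>l<i. bad x d l"
  shows "TT x d i \<le> qq ^ i * (10 powr \<beta> * Cg)"
  using b
proof (induction i)
  case 0
  have r0: "rr d 0 > 0" using d by (rule rr_pos)
  have "TT x d 0 = (rr d 0 / 10) powr (-\<beta>) * measure \<mu> (ball x (rr d 0)) powr \<gamma>"
    by (simp add: TT_def rr_Suc)
  also have "\<dots> \<le> (rr d 0 / 10) powr (-\<beta>) * (Cg * rr d 0 powr \<beta>)"
    by (intro mult_left_mono ball_powr_bound r0) auto
  also have "(rr d 0 / 10) powr (-\<beta>) = rr d 0 powr (-\<beta>) * 10 powr \<beta>"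
    using powr_minus_divide[of 10 \<beta>] by (simp add: powr_divide)
  also have "rr d 0 powr (-\<beta>) * 10 powr \<beta> * (Cg * rr d 0 powr \<beta>) = 10 powr \<beta> * Cg * (rr d 0 powr (-\<beta>) * rr d 0 powr \<beta>)"
    by (simp add: algebra_simps)
  also have "rr d 0 powr (-\<beta>) * rr d 0 powr \<beta> = 1" using r0 by (simp flip: powr_add)
  finally show ?case by simp
next
  case (Suc i)
  have IH: "TT x d i \<le> qq ^ i * (10 powr \<beta> * Cg)" using Suc by auto
  have bi: "bad x d i" using Suc.prems by auto
  have "TT x d (Suc i) = (rr d (Suc i) / 10) powr (-\<beta>) * measure \<mu> (ball x (rr d (Suc i))) powr \<gamma>"
    by (simp add: TT_def rr_Suc[of d "Suc i"])
  also have "\<dots> \<le> qq * (rr d (Suc i) powr (-\<beta>) * measure \<mu> (ball x (rr d i)) powr \<gamma>)"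
    using bi by (intro Tstep rr_pos d) (auto simp: bad_def)
  also have "\<dots> = qq * TT x d i" by (simp add: TT_def)
  also have "\<dots> \<le> qq * (qq ^ i * (10 powr \<beta> * Cg))" using IH qq_pos by (intro mult_left_mono) auto
  finally show ?case by simp
qed

lemma sum_ennreal_geom:
  assumes "a \<ge> 0"
  shows "(\<Sum>i. ennreal (a * qq ^ i)) = ennreal (a / (1 - qq))"
proof -
  have sm: "summable (\<lambda>i. a * qq ^ i)" using qq_pos qq_less1 by (intro summable_mult summable_geometric) simp
  have "(\<Sum>i. ennreal (a * qq ^ i)) = ennreal (\<Sum>i. a * qq ^ i)"
    using assms qq_pos by (intro suminf_ennreal2 sm) simp
  also have "(\<Sum>i. a * qq ^ i) = a * (1 / (1 - qq))"
    using qq_pos qq_less1 by (subst suminf_mult) (auto intro: summable_geometric simp: suminf_geometric)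
  finally show ?thesis by simp
qed


lemma pw_decomp:
  fixes f :: "'a \<Rightarrow> real" and t \<epsilon> d :: real and x z x' :: 'a and Near :: "'a set" and P :: "nat \<Rightarrow> bool"
  assumes fm[measurable]: "f \<in> borel_measurable borel" and fnn: "\<And>y. f y \<ge> 0" and t: "t > 0"
    and eps: "0 < \<epsilon>" "\<epsilon> \<le> 1"
    and M: "frac_maximal \<mu> N \<alpha> f x \<le> ennreal (\<epsilon> * t)"
    and Iz: "(\<integral>\<^sup>+y. kern f z y \<partial>\<mu>) \<le> ennreal t"
    and d: "d = dist x z" "d > 0"
    and Near[measurable]: "Near \<in> sets \<mu>"
    and cover: "\<And>y. dist x y < rr d 0 \<Longrightarrow> y \<in> Near \<or> (\<exists>i. P i \<and> y \<in> ball x (rr d i) - ball x (rr d (Suc i)))"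
    and hP: "\<And>i. P i \<Longrightarrow> dist x x' \<le> rr d (Suc i) / 2 \<and> (\<forall>l<i. bad x d l)"
    and hx': "dist x x' \<le> rr d 0 / 2"
  shows "(\<integral>\<^sup>+y. kern f x' y \<partial>\<mu>) \<le> (\<integral>\<^sup>+y. indicator Near y * kern f x' y \<partial>\<mu>) + ennreal (CB * t)"
proof -
  define S where "S i = (if P i then ball x (rr d i) - ball x (rr d (Suc i)) else {})" for i
  define Mid where "Mid = ball x (2*d) - ball x (rr d 0)"
  define Far where "Far = - ball x (2*d)"
  have r0: "rr d 0 = d / 10" by (simp add: rr_def)
  have Sm: "S i \<in> sets \<mu>" for i by (simp add: S_def)
  have Midm: "Mid \<in> sets \<mu>" by (simp add: Mid_def)
  have Farm: "Far \<in> sets \<mu>" by (simp add: Far_def)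
  have gm: "kern f x' \<in> borel_measurable \<mu>" by (rule kern_meas2[OF fm])
  have cov: "y \<in> Near \<or> (\<exists>i. y \<in> S i) \<or> y \<in> Mid \<or> y \<in> Far" for y
  proof (cases "dist x y < rr d 0")
    case True
    then show ?thesis using cover[OF True] by (auto simp: S_def)
  next
    case False
    then show ?thesis by (auto simp: Mid_def Far_def)
  qed
  have dec: "(\<integral>\<^sup>+y. kern f x' y \<partial>\<mu>) \<le> (\<integral>\<^sup>+y. indicator Near y * kern f x' y \<partial>\<mu>) + (\<Sum>i. \<integral>\<^sup>+y. indicator (S i) y * kern f x' y \<partial>\<mu>)
      + (\<integral>\<^sup>+y. indicator Mid y * kern f x' y \<partial>\<mu>) + (\<integral>\<^sup>+y. indicator Far y * kern f x' y \<partial>\<mu>)"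
    by (rule decomp_le[OF gm Near Sm Midm Farm cov])
  have g: "\<gamma> \<ge> 0" using beta_pos by simp
  have hFar: "(\<integral>\<^sup>+y. indicator Far y * kern f x' y \<partial>\<mu>) \<le> ennreal (3 powr \<beta> * t)"
  proof -
    have "(\<integral>\<^sup>+y. indicator Far y * kern f x' y \<partial>\<mu>) \<le> (\<integral>\<^sup>+y. ennreal (3 powr \<beta>) * kern f z y \<partial>\<mu>)"
    proof (intro nn_integral_mono)
      fix y
      show "indicator Far y * kern f x' y \<le> ennreal (3 powr \<beta>) * kern f z y"
      proof (cases "y \<in> Far")
        case True
        then have D: "dist x y \<ge> 2 * d" by (simp add: Far_def)
        have t1: "dist x y \<le> dist x x' + dist x' y" by (rule dist_triangle)
        have t2: "dist z y \<le> dist z x + dist x y" by (rule dist_triangle)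
        have e: "dist x x' \<le> d / 20" using hx' r0 by simp
        have t3: "dist z y \<le> d + dist x y" using t2 d(1) by (simp add: dist_commute)
        have "0 < dist x' y" "dist z y \<le> 3 * dist x' y"
          using D t1 t3 e d(2) by linarith+
        then have "kern f x' y \<le> ennreal (3 powr \<beta>) * kern f z y"
          using fnn by (intro kern_far) auto
        then show ?thesis using True by simp
      qed simp
    qed
    also have "\<dots> = ennreal (3 powr \<beta>) * (\<integral>\<^sup>+y. kern f z y \<partial>\<mu>)"
      by (rule nn_integral_cmult) (rule kern_meas2[OF fm])
    also have "\<dots> \<le> ennreal (3 powr \<beta>) * ennreal t" using Iz by (intro mult_left_mono) auto
    also have "\<dots> = ennreal (3 powr \<beta> * t)" using t by (simp add: ennreal_mult)
    finally show ?thesis .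
  qed
  have hMid: "(\<integral>\<^sup>+y. indicator Mid y * kern f x' y \<partial>\<mu>) \<le> ennreal (Cg * 40 powr \<beta> * t)"
  proof -
    define a where "a = d / 20"
    have apos: "a > 0" using d by (simp add: a_def)
    have "(\<integral>\<^sup>+y. indicator Mid y * kern f x' y \<partial>\<mu>) \<le> (\<integral>\<^sup>+y. ennreal (a powr (-\<beta>)) * (indicator (ball x (2*d)) y * ennreal (f y)) \<partial>\<mu>)"
    proof (intro nn_integral_mono)
      fix y
      show "indicator Mid y * kern f x' y \<le> ennreal (a powr (-\<beta>)) * (indicator (ball x (2*d)) y * ennreal (f y))"
      proof (cases "y \<in> Mid")
        case True
        then have D: "dist x y \<ge> d / 10" "y \<in> ball x (2*d)" using r0 by (auto simp: Mid_def)
        have t1: "dist x y \<le> dist x x' + dist x' y" by (rule dist_triangle)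
        have "a \<le> dist x' y" using D t1 hx' r0 by (simp add: a_def)
        then have "kern f x' y \<le> ennreal (f y * a powr (-\<beta>))"
          using fnn apos by (intro kern_le_const) auto
        then show ?thesis using True D fnn by (simp add: ennreal_mult mult.commute)
      qed simp
    qed
    also have "\<dots> = ennreal (a powr (-\<beta>)) * (\<integral>\<^sup>+y. indicator (ball x (2*d)) y * ennreal (f y) \<partial>\<mu>)"
      by (rule nn_integral_cmult) measurable
    also have "\<dots> \<le> ennreal (a powr (-\<beta>)) * ennreal (\<epsilon> * t * measure \<mu> (ball x (2*d)) powr \<gamma>)"
      using eps t d by (intro mult_left_mono max_ball[OF M] fnn) auto
    also have "\<dots> = ennreal (a powr (-\<beta>) * (\<epsilon> * t * measure \<mu> (ball x (2*d)) powr \<gamma>))"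
      using eps t by (simp add: ennreal_mult)
    also have "a powr (-\<beta>) * (\<epsilon> * t * measure \<mu> (ball x (2*d)) powr \<gamma>) \<le> a powr (-\<beta>) * (\<epsilon> * t * (Cg * (2*d) powr \<beta>))"
      using eps t d by (intro mult_left_mono ball_powr_bound) auto
    also have "\<dots> = \<epsilon> * t * Cg * ((2*d) powr \<beta> / a powr \<beta>)"
      using powr_minus_divide[of a \<beta>] by simp
    also have "(2*d) powr \<beta> / a powr \<beta> = 40 powr \<beta>"
    proof -
      have "(2*d) powr \<beta> / a powr \<beta> = ((2*d) / a) powr \<beta>" by (simp add: powr_divide)
      also have "(2*d) / a = 40" using d by (simp add: a_def)
      finally show ?thesis .
    qed
    also have "\<epsilon> * t * Cg * 40 powr \<beta> \<le> Cg * 40 powr \<beta> * t"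
    proof -
      have "\<epsilon> * (t * Cg * 40 powr \<beta>) \<le> 1 * (t * Cg * 40 powr \<beta>)"
        using eps t Cg_pos by (intro mult_right_mono) auto
      then show ?thesis by (simp add: algebra_simps)
    qed
    finally show ?thesis by (simp add: ennreal_leI)
  qed
  have hS: "(\<Sum>i. \<integral>\<^sup>+y. indicator (S i) y * kern f x' y \<partial>\<mu>) \<le> ennreal (Cg * 20 powr \<beta> / (1 - qq) * t)"
  proof -
    have "(\<Sum>i. \<integral>\<^sup>+y. indicator (S i) y * kern f x' y \<partial>\<mu>) \<le> (\<Sum>i. ennreal (t * Cg * 20 powr \<beta> * qq ^ i))"
    proof (rule suminf_le)
      fix i
      show "(\<integral>\<^sup>+y. indicator (S i) y * kern f x' y \<partial>\<mu>) \<le> ennreal (t * Cg * 20 powr \<beta> * qq ^ i)"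
      proof (cases "P i")
        case False
        then show ?thesis by (simp add: S_def)
      next
        case True
        note hPi = hP[OF True]
        define a where "a = rr d (Suc i) / 2"
        have apos: "a > 0" using d by (simp add: a_def rr_pos)
        have "(\<integral>\<^sup>+y. indicator (S i) y * kern f x' y \<partial>\<mu>) \<le> (\<integral>\<^sup>+y. ennreal (a powr (-\<beta>)) * (indicator (ball x (rr d i)) y * ennreal (f y)) \<partial>\<mu>)"
        proof (intro nn_integral_mono)
          fix y
          show "indicator (S i) y * kern f x' y \<le> ennreal (a powr (-\<beta>)) * (indicator (ball x (rr d i)) y * ennreal (f y))"
          proof (cases "y \<in> S i")
            case yS: True
            then have D: "dist x y \<ge> rr d (Suc i)" "y \<in> ball x (rr d i)" using True by (auto simp: S_def)
            have t1: "dist x y \<le> dist x x' + dist x' y" by (rule dist_triangle)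
            have "a \<le> dist x' y" using D t1 hPi by (simp add: a_def)
            then have "kern f x' y \<le> ennreal (f y * a powr (-\<beta>))"
              using fnn apos by (intro kern_le_const) auto
            then show ?thesis using yS D fnn by (simp add: ennreal_mult mult.commute)
          qed simp
        qed
        also have "\<dots> = ennreal (a powr (-\<beta>)) * (\<integral>\<^sup>+y. indicator (ball x (rr d i)) y * ennreal (f y) \<partial>\<mu>)"
          by (rule nn_integral_cmult) measurable
        also have "\<dots> \<le> ennreal (a powr (-\<beta>)) * ennreal (\<epsilon> * t * measure \<mu> (ball x (rr d i)) powr \<gamma>)"
          using eps t d by (intro mult_left_mono max_ball[OF M] fnn rr_pos) auto
        also have "\<dots> = ennreal (a powr (-\<beta>) * (\<epsilon> * t * measure \<mu> (ball x (rr d i)) powr \<gamma>))"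
          using eps t by (simp add: ennreal_mult)
        also have "a powr (-\<beta>) * (\<epsilon> * t * measure \<mu> (ball x (rr d i)) powr \<gamma>) = \<epsilon> * t * 2 powr \<beta> * TT x d i"
        proof -
          have "a powr (-\<beta>) = rr d (Suc i) powr (-\<beta>) * 2 powr \<beta>"
            using powr_minus_divide[of 2 \<beta>] by (simp add: a_def powr_divide)
          then show ?thesis by (simp add: TT_def algebra_simps)
        qed
        also have "\<dots> \<le> \<epsilon> * t * 2 powr \<beta> * (qq ^ i * (10 powr \<beta> * Cg))"
          using eps t hPi by (intro mult_left_mono TT_bound d) auto
        also have "\<dots> = \<epsilon> * (t * Cg * (2 powr \<beta> * 10 powr \<beta>) * qq ^ i)" by (simp add: algebra_simps)
        also have "2 powr \<beta> * 10 powr \<beta> = (20::real) powr \<beta>" by (simp flip: powr_mult)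
        also have "\<epsilon> * (t * Cg * 20 powr \<beta> * qq ^ i) \<le> 1 * (t * Cg * 20 powr \<beta> * qq ^ i)"
          using eps t Cg_pos qq_pos by (intro mult_right_mono) auto
        finally show ?thesis by (simp add: ennreal_leI)
      qed
    qed (rule summableI)+
    also have "\<dots> = ennreal (t * Cg * 20 powr \<beta> / (1 - qq))"
      using t Cg_pos by (intro sum_ennreal_geom) auto
    finally show ?thesis by (simp add: algebra_simps)
  qed
  have "(\<integral>\<^sup>+y. kern f x' y \<partial>\<mu>) \<le> (\<integral>\<^sup>+y. indicator Near y * kern f x' y \<partial>\<mu>) + ennreal (Cg * 20 powr \<beta> / (1 - qq) * t)
      + ennreal (Cg * 40 powr \<beta> * t) + ennreal (3 powr \<beta> * t)"
    using dec hS hMid hFar by (meson add_mono order_trans order_refl)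
  also have "\<dots> = (\<integral>\<^sup>+y. indicator Near y * kern f x' y \<partial>\<mu>) + ennreal (CB * t)"
  proof -
    have n: "0 \<le> Cg * 20 powr \<beta> / (1 - qq) * t" "0 \<le> Cg * 40 powr \<beta> * t" "0 \<le> 3 powr \<beta> * t"
      using Cg_pos qq_less1 t by auto
    have "ennreal (Cg * 20 powr \<beta> / (1 - qq) * t) + ennreal (Cg * 40 powr \<beta> * t) + ennreal (3 powr \<beta> * t) = ennreal (CB * t)"
      using n by (simp add: ennreal_plus[symmetric] CB_def algebra_simps del: ennreal_plus)
    then show ?thesis by (simp add: add.assoc)
  qed
  finally show ?thesis .
qed


lemma rr_eq: "rr d i = rr d 0 * (1/10) ^ i"
  by (simp add: rr_def power_divide field_simps)

lemma shell_cover: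
  assumes d: "d > 0" and y: "0 < dist x y" "dist x y < rr d 0"
  shows "\<exists>i. y \<in> ball x (rr d i) - ball x (rr d (Suc i))"
proof -
  obtain i where "rr d 0 * (1/10) ^ Suc i \<le> dist x y" "dist x y < rr d 0 * (1/10) ^ i"
    using shell_exists[OF y, of "1/10"] by auto
  then have "y \<in> ball x (rr d i) - ball x (rr d (Suc i))"
    using rr_eq[of d i] rr_eq[of d "Suc i"] by auto
  then show ?thesis by blast
qed

lemma kern_indicator: "indicator A y * kern f x y = kern (\<lambda>y. indicator A y * f y) x y"
  by (simp add: kern_def indicator_def)

lemma level_meas:
  assumes "f \<in> borel_measurable borel"
  shows "{x. c < (\<integral>\<^sup>+y. kern f x y \<partial>\<mu>)} \<in> sets \<mu>"
proof -
  have "{x \<in> space \<mu>. c < (\<integral>\<^sup>+y. kern f x y \<partial>\<mu>)} \<in> sets \<mu>"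
    using I_meas[OF assms] by measurable
  then show ?thesis by (simp add: space_mu)
qed

lemma local_est:
  fixes f :: "'a \<Rightarrow> real" and t \<epsilon> :: real and x :: 'a
  assumes fm[measurable]: "f \<in> borel_measurable borel" and fnn: "\<And>y. f y \<ge> 0" and t: "t > 0"
    and eps: "0 < \<epsilon>" "\<epsilon> \<le> 1"
    and M: "frac_maximal \<mu> N \<alpha> f x \<le> ennreal (\<epsilon> * t)"
    and Ix: "(\<integral>\<^sup>+y. kern f x y \<partial>\<mu>) > ennreal ((1 + CB) * t)"
    and Oc: "Oc = {x. (\<integral>\<^sup>+y. kern f x y \<partial>\<mu>) \<le> ennreal t}" "Oc \<noteq> {}"
    and E: "E = {x. (\<integral>\<^sup>+y. kern f x y \<partial>\<mu>) > ennreal ((1 + CB) * t)}"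
  shows "\<exists>\<rho>>0. \<rho> \<le> infdist x Oc \<and> (\<exists>G\<in>sets \<mu>. E \<inter> ball x (5 * \<rho>) \<subseteq> G \<and>
           emeasure \<mu> G \<le> ennreal (CW * Kd * \<epsilon> powr (real N / \<beta>)) * emeasure \<mu> (ball x \<rho>))"
proof -
  have closedOc: "closed Oc" unfolding Oc(1) by (rule closed_sublevel[OF fm fnn])
  have "ennreal t \<le> ennreal ((1 + CB) * t)" using t CB_pos by (intro ennreal_leI) (simp add: algebra_simps)
  then have "x \<notin> Oc" using Ix Oc(1) by auto
  then have dpos: "infdist x Oc > 0" using closedOc Oc(2) by (rule infdist_pos_not_in_closed[rotated 2])
  define d where "d = infdist x Oc"
  obtain z where z: "z \<in> Oc" "infdist x Oc = dist x z" using infdist_attains_inf[OF closedOc Oc(2)] by blast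
  have Iz: "(\<integral>\<^sup>+y. kern f z y \<partial>\<mu>) \<le> ennreal t" using z Oc(1) by auto
  have dd: "d = dist x z" "d > 0" using z dpos by (auto simp: d_def)
  show ?thesis
  proof (cases "\<forall>l. bad x d l")
    case True
    have "(\<integral>\<^sup>+y. kern f x y \<partial>\<mu>) \<le> (\<integral>\<^sup>+y. indicator {x} y * kern f x y \<partial>\<mu>) + ennreal (CB * t)"
    proof (rule pw_decomp[OF fm fnn t eps M Iz dd, where P="\<lambda>_. True"])
      show "y \<in> {x} \<or> (\<exists>i. True \<and> y \<in> ball x (rr d i) - ball x (rr d (Suc i)))" if "dist x y < rr d 0" for y
        using shell_cover[OF dd(2) _ that] by (cases "y = x") auto
    qed (use True dd in \<open>auto simp: rr_def\<close>)
    also have "(\<integral>\<^sup>+y. indicator {x} y * kern f x y \<partial>\<mu>) = 0"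
      using nn_integral_null_set[OF null_single[of x], of "kern f x"] by (simp add: mult.commute)
    finally have "(\<integral>\<^sup>+y. kern f x y \<partial>\<mu>) \<le> ennreal (CB * t)" by simp
    moreover have "ennreal (CB * t) < ennreal ((1 + CB) * t)" using t CB_pos
      by (subst ennreal_less_iff) (auto simp: algebra_simps)
    ultimately show ?thesis using Ix by auto
  next
    case False
    then have ex: "\<exists>l. \<not> bad x d l" by blast
    define j where "j = (LEAST l. \<not> bad x d l)"
    have gj: "\<not> bad x d j" unfolding j_def by (rule LeastI_ex[OF ex])
    have bl: "bad x d l" if "l < j" for l using not_less_Least[OF that[unfolded j_def]] j_def by simp
    define \<rho> where "\<rho> = rr d (Suc j)"
    have rpos: "\<rho> > 0" using dd by (simp add: \<rho>_def rr_pos)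
    have r5: "5 * \<rho> = rr d j / 2" by (simp add: \<rho>_def rr_Suc)
    have rle: "\<rho> \<le> d"
    proof -
      have "\<rho> \<le> rr d 0" unfolding \<rho>_def using dd by (intro rr_mono) auto
      also have "\<dots> \<le> d" using dd by (simp add: rr_def)
      finally show ?thesis .
    qed
    define f1 where "f1 = (\<lambda>y. indicator (ball x (rr d j)) y * f y)"
    have f1m[measurable]: "f1 \<in> borel_measurable borel" unfolding f1_def by measurable
    have f1nn: "f1 y \<ge> 0" for y using fnn by (simp add: f1_def)
    define G where "G = ball x (5 * \<rho>) \<inter> {x'. (\<integral>\<^sup>+y. kern f1 x' y \<partial>\<mu>) > ennreal t}"
    have Gm: "G \<in> sets \<mu>" unfolding G_def using level_meas[OF f1m] by (intro sets.Int) auto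
    have sub: "E \<inter> ball x (5 * \<rho>) \<subseteq> G"
    proof
      fix x' assume x': "x' \<in> E \<inter> ball x (5 * \<rho>)"
      have dx': "dist x x' \<le> rr d j / 2" using x' r5 by auto
      have "(\<integral>\<^sup>+y. kern f x' y \<partial>\<mu>) \<le> (\<integral>\<^sup>+y. indicator (ball x (rr d j)) y * kern f x' y \<partial>\<mu>) + ennreal (CB * t)"
      proof (rule pw_decomp[OF fm fnn t eps M Iz dd, where P="\<lambda>i. i < j"])
        show "y \<in> ball x (rr d j) \<or> (\<exists>i. i < j \<and> y \<in> ball x (rr d i) - ball x (rr d (Suc i)))"
          if y: "dist x y < rr d 0" for y
        proof (cases "dist x y < rr d j")
          case True then show ?thesis by auto
        next
          case False
          then have pos: "0 < dist x y" using rr_pos[OF dd(2), of j] by linarith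
          obtain i where i: "y \<in> ball x (rr d i) - ball x (rr d (Suc i))" using shell_cover[OF dd(2) pos y] by blast
          have "i < j"
          proof (rule ccontr)
            assume "\<not> i < j"
            then have "rr d i \<le> rr d j" using dd by (intro rr_mono) auto
            then show False using i False by auto
          qed
          then show ?thesis using i by blast
        qed
        show "dist x x' \<le> rr d (Suc i) / 2 \<and> (\<forall>l<i. bad x d l)" if "i < j" for i
        proof
          have "rr d j \<le> rr d (Suc i)" using that dd by (intro rr_mono) auto
          then show "dist x x' \<le> rr d (Suc i) / 2" using dx' by simp
          show "\<forall>l<i. bad x d l" using bl that by auto
        qed
        have "rr d j \<le> rr d 0" using dd by (intro rr_mono) auto
        then show "dist x x' \<le> rr d 0 / 2" using dx' by simp
      qed simp
      also have "(\<integral>\<^sup>+y. indicator (ball x (rr d j)) y * kern f x' y \<partial>\<mu>) = (\<integral>\<^sup>+y. kern f1 x' y \<partial>\<mu>)"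
        by (simp add: kern_indicator f1_def)
      finally have le: "(\<integral>\<^sup>+y. kern f x' y \<partial>\<mu>) \<le> (\<integral>\<^sup>+y. kern f1 x' y \<partial>\<mu>) + ennreal (CB * t)" .
      have gt: "(\<integral>\<^sup>+y. kern f x' y \<partial>\<mu>) > ennreal ((1 + CB) * t)" using x' E by auto
      have "(\<integral>\<^sup>+y. kern f1 x' y \<partial>\<mu>) > ennreal t"
      proof (rule ccontr)
        assume "\<not> ennreal t < (\<integral>\<^sup>+y. kern f1 x' y \<partial>\<mu>)"
        then have "(\<integral>\<^sup>+y. kern f1 x' y \<partial>\<mu>) + ennreal (CB * t) \<le> ennreal t + ennreal (CB * t)"
          by (intro add_right_mono) simp
        also have "\<dots> = ennreal ((1 + CB) * t)" using t CB_pos by (simp add: ennreal_plus[symmetric] algebra_simps del: ennreal_plus)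
        finally show False using le gt by simp
      qed
      then show "x' \<in> G" using x' by (simp add: G_def)
    qed
    define m where "m = measure \<mu> (ball x (rr d j))"
    have mnn: "m \<ge> 0" by (simp add: m_def)
    have A: "(\<integral>\<^sup>+y. ennreal (f1 y) \<partial>\<mu>) \<le> ennreal (\<epsilon> * t * m powr \<gamma>)"
    proof -
      have "(\<integral>\<^sup>+y. ennreal (f1 y) \<partial>\<mu>) = (\<integral>\<^sup>+y. indicator (ball x (rr d j)) y * ennreal (f y) \<partial>\<mu>)"
        by (intro nn_integral_cong) (simp add: f1_def indicator_def)
      also have "\<dots> \<le> ennreal (\<epsilon> * t * m powr \<gamma>)" unfolding m_def
        using eps t dd by (intro max_ball[OF M] fnn rr_pos) auto
      finally show ?thesis .
    qed
    have "emeasure \<mu> G \<le> emeasure \<mu> {x'. (\<integral>\<^sup>+y. kern f1 x' y \<partial>\<mu>) > ennreal t}"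
    proof (rule emeasure_mono)
      show "G \<subseteq> {x'. (\<integral>\<^sup>+y. kern f1 x' y \<partial>\<mu>) > ennreal t}" by (auto simp: G_def)
      show "{x'. (\<integral>\<^sup>+y. kern f1 x' y \<partial>\<mu>) > ennreal t} \<in> sets \<mu>" using level_meas[OF f1m] by simp
    qed
    also have "\<dots> \<le> ennreal (CW * ((\<epsilon> * t * m powr \<gamma>) / t) powr (real N / \<beta>))"
      by (rule weak_type[OF f1m f1nn A t])
    also have "(\<epsilon> * t * m powr \<gamma>) / t = \<epsilon> * m powr \<gamma>" using t by simp
    also have "(\<epsilon> * m powr \<gamma>) powr (real N / \<beta>) = \<epsilon> powr (real N / \<beta>) * m"
    proof -
      have "(\<epsilon> * m powr \<gamma>) powr (real N / \<beta>) = \<epsilon> powr (real N / \<beta>) * (m powr \<gamma>) powr (real N / \<beta>)"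
        by (rule powr_mult)
      also have "(m powr \<gamma>) powr (real N / \<beta>) = m powr 1"
        using beta_pos N1 by (simp add: powr_powr)
      also have "m powr 1 = m" using mnn by (rule powr_one)
      finally show ?thesis .
    qed
    also have "CW * (\<epsilon> powr (real N / \<beta>) * m) \<le> CW * (\<epsilon> powr (real N / \<beta>) * (Kd * measure \<mu> (ball x \<rho>)))"
    proof -
      have "m \<le> Kd * measure \<mu> (ball x \<rho>)" using gj by (simp add: bad_def m_def \<rho>_def)
      then show ?thesis using CL_pos by (intro mult_left_mono) (auto simp: CW_def)
    qed
    also have "ennreal (CW * (\<epsilon> powr (real N / \<beta>) * (Kd * measure \<mu> (ball x \<rho>)))) =
        ennreal (CW * Kd * \<epsilon> powr (real N / \<beta>)) * emeasure \<mu> (ball x \<rho>)"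
      using CL_pos Kd_pos by (simp add: emeasure_ball_eq ennreal_mult[symmetric] CW_def algebra_simps)
    finally have "emeasure \<mu> G \<le> ennreal (CW * Kd * \<epsilon> powr (real N / \<beta>)) * emeasure \<mu> (ball x \<rho>)"
      by (simp add: ennreal_leI)
    then show ?thesis using rpos rle sub Gm by (auto simp: d_def)
  qed
qed


lemma countable_cover_bound:
  fixes C :: "'b set" and G B :: "'b \<Rightarrow> 'a set" and K :: ennreal
  assumes C: "countable C" and Gm: "\<And>c. c \<in> C \<Longrightarrow> G c \<in> sets \<mu>" and Bm: "\<And>c. c \<in> C \<Longrightarrow> B c \<in> sets \<mu>"
    and disj: "disjoint_family_on B C"
    and le: "\<And>c. c \<in> C \<Longrightarrow> emeasure \<mu> (G c) \<le> K * emeasure \<mu> (B c)"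
    and sub: "\<And>c. c \<in> C \<Longrightarrow> B c \<subseteq> \<Omega>" and Om: "\<Omega> \<in> sets \<mu>"
  shows "emeasure \<mu> (\<Union>c\<in>C. G c) \<le> K * emeasure \<mu> \<Omega>"
proof -
  define I where "I = to_nat_on C ` C"
  define G' where "G' n = (if n \<in> I then G (from_nat_into C n) else {})" for n
  define B' where "B' n = (if n \<in> I then B (from_nat_into C n) else {})" for n
  have inI: "n \<in> I \<Longrightarrow> from_nat_into C n \<in> C \<and> to_nat_on C (from_nat_into C n) = n" for n
    using C by (auto simp: I_def)
  have U: "(\<Union>c\<in>C. G c) = (\<Union>n. G' n)"
  proof (rule set_eqI, rule iffI)
    fix y assume "y \<in> (\<Union>c\<in>C. G c)"
    then obtain c where c: "c \<in> C" "y \<in> G c" by blast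
    then have "to_nat_on C c \<in> I" "from_nat_into C (to_nat_on C c) = c" using C by (auto simp: I_def)
    then have "y \<in> G' (to_nat_on C c)" using c by (simp add: G'_def)
    then show "y \<in> (\<Union>n. G' n)" by blast
  next
    fix y assume "y \<in> (\<Union>n. G' n)"
    then obtain n where "y \<in> G' n" by blast
    then show "y \<in> (\<Union>c\<in>C. G c)" using inI[of n] by (auto simp: G'_def split: if_splits)
  qed
  have G'm: "range G' \<subseteq> sets \<mu>" using inI Gm by (auto simp: G'_def)
  have B'm: "range B' \<subseteq> sets \<mu>" using inI Bm by (auto simp: B'_def)
  have dB': "disjoint_family B'"
    unfolding disjoint_family_on_def
  proof (intro ballI impI)
    fix n m :: nat assume nm: "n \<noteq> m"
    show "B' n \<inter> B' m = {}"
    proof (cases "n \<in> I \<and> m \<in> I")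
      case True
      then have "from_nat_into C n \<noteq> from_nat_into C m" using inI nm by metis
      then show ?thesis using True inI disj by (auto simp: B'_def disjoint_family_on_def)
    next
      case False then show ?thesis by (auto simp: B'_def)
    qed
  qed
  have "emeasure \<mu> (\<Union>c\<in>C. G c) \<le> (\<Sum>n. emeasure \<mu> (G' n))"
    unfolding U by (rule emeasure_subadditive_countably[OF G'm])
  also have "\<dots> \<le> (\<Sum>n. K * emeasure \<mu> (B' n))"
    by (intro suminf_le summableI) (auto simp: G'_def B'_def inI le)
  also have "\<dots> = K * (\<Sum>n. emeasure \<mu> (B' n))" by simp
  also have "(\<Sum>n. emeasure \<mu> (B' n)) = emeasure \<mu> (\<Union>n. B' n)" by (rule suminf_emeasure[OF B'm dB'])
  also have "emeasure \<mu> (\<Union>n. B' n) \<le> emeasure \<mu> \<Omega>"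
    using inI sub by (intro emeasure_mono Om) (auto simp: B'_def split: if_splits)
  finally show ?thesis by (metis mult_left_mono zero_le)
qed


lemma int_le_global:
  assumes fm[measurable]: "f \<in> borel_measurable borel" and fnn: "\<And>y. f y \<ge> 0"
    and M: "frac_maximal \<mu> N \<alpha> f x0 \<le> ennreal c" and c: "c \<ge> 0"
    and fin: "emeasure \<mu> UNIV < \<infinity>"
  shows "(\<integral>\<^sup>+y. ennreal (f y) \<partial>\<mu>) \<le> ennreal (c * measure \<mu> UNIV powr \<gamma>)"
proof -
  define h where "h n y = indicator (ball x0 (real n)) y * ennreal (f y)" for n y
  have hm: "h n \<in> borel_measurable \<mu>" for n unfolding h_def by measurable
  have inc: "incseq h"
    unfolding incseq_def le_fun_def h_def by (auto simp: indicator_def)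
  have pw: "ennreal (f y) = (SUP n. h n y)" for y
  proof (rule antisym)
    obtain n :: nat where "dist x0 y < real n" using reals_Archimedean2 by blast
    then have "h n y = ennreal (f y)" by (simp add: h_def)
    then show "ennreal (f y) \<le> (SUP n. h n y)" by (metis SUP_upper UNIV_I)
    show "(SUP n. h n y) \<le> ennreal (f y)" by (rule SUP_least) (simp add: h_def indicator_def)
  qed
  have "(\<integral>\<^sup>+y. ennreal (f y) \<partial>\<mu>) = (\<integral>\<^sup>+y. (SUP n. h n y) \<partial>\<mu>)" by (simp flip: pw)
  also have "\<dots> = (SUP n. integral\<^sup>N \<mu> (h n))" by (rule nn_integral_monotone_convergence_SUP[OF inc hm])
  also have "\<dots> \<le> ennreal (c * measure \<mu> UNIV powr \<gamma>)"
  proof (rule SUP_least)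
    fix n :: nat
    show "integral\<^sup>N \<mu> (h n) \<le> ennreal (c * measure \<mu> UNIV powr \<gamma>)"
    proof (cases "n = 0")
      case True
      have "h 0 = (\<lambda>y. 0)" by (auto simp: h_def fun_eq_iff ball_empty)
      then show ?thesis using True by simp
    next
      case False
      then have "integral\<^sup>N \<mu> (h n) \<le> ennreal (c * measure \<mu> (ball x0 (real n)) powr \<gamma>)"
        unfolding h_def by (intro max_ball[OF M] c fnn) auto
      also have "\<dots> \<le> ennreal (c * measure \<mu> UNIV powr \<gamma>)"
      proof (intro ennreal_leI mult_left_mono c powr_mono2)
        show "measure \<mu> (ball x0 (real n)) \<le> measure \<mu> UNIV"
          using fin by (intro measure_mono_fmeasurable) (auto simp: fmeasurable_def)
      qed (use beta_pos in auto)
      finally show ?thesis .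
    qed
  qed
  finally show ?thesis .
qed

lemma ball_sub_Omega:
  assumes "\<rho> \<le> infdist c Oc" "y \<in> ball c \<rho>"
  shows "y \<notin> Oc"
proof
  assume "y \<in> Oc"
  then have "infdist c Oc \<le> dist c y" by (rule infdist_le)
  then show False using assms by auto
qed

theorem main_loc:
  assumes fm[measurable]: "f \<in> borel_measurable borel" and fnn: "\<And>y. f y \<ge> 0" and t: "t > 0"
    and eps: "0 < \<epsilon>" "\<epsilon> \<le> 1"
  shows "emeasure \<mu> {x. (\<integral>\<^sup>+y. kern f x y \<partial>\<mu>) > ennreal ((1 + CB) * t) \<and> frac_maximal \<mu> N \<alpha> f x \<le> ennreal (\<epsilon> * t)}
         \<le> ennreal (CW * Kd * \<epsilon> powr (real N / \<beta>)) * emeasure \<mu> {x. (\<integral>\<^sup>+y. kern f x y \<partial>\<mu>) > ennreal t}"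
    (is "emeasure \<mu> ?E \<le> ennreal ?Cc * emeasure \<mu> ?Om")
proof -
  define E where "E = ?E"
  define Om where "Om = ?Om"
  define Oc where "Oc = {x. (\<integral>\<^sup>+y. kern f x y \<partial>\<mu>) \<le> ennreal t}"
  define E' where "E' = {x. (\<integral>\<^sup>+y. kern f x y \<partial>\<mu>) > ennreal ((1 + CB) * t)}"
  have Ccpos: "?Cc > 0" using CL_pos Kd_pos eps by (simp add: CW_def)
  have Omm: "Om \<in> sets \<mu>" unfolding Om_def by (rule level_meas[OF fm])
  have E'm: "E' \<in> sets \<mu>" unfolding E'_def by (rule level_meas[OF fm])
  have OmOc: "Om = - Oc" by (auto simp: Om_def Oc_def not_le)
  have EE': "E \<subseteq> E'" by (auto simp: E_def E'_def)
  show ?thesis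
  proof (cases "E \<in> sets \<mu>")
    case False
    then show ?thesis by (simp add: emeasure_notin_sets E_def)
  next
    case Em: True
    show ?thesis
    proof (cases "Oc = {}")
      case True
      then have OmU: "Om = UNIV" using OmOc by simp
      show ?thesis
      proof (cases "emeasure \<mu> UNIV = \<infinity>")
        case True
        then have "ennreal ?Cc * emeasure \<mu> ?Om = \<infinity>"
        proof -
          have "ennreal ?Cc \<noteq> 0" using Ccpos by (subst ennreal_eq_0_iff) linarith
          then show ?thesis using OmU True by (simp add: Om_def[symmetric] ennreal_mult_top)
        qed
        then show ?thesis by simp
      next
        case False
        then have fin: "emeasure \<mu> UNIV < \<infinity>" by (simp add: less_top)
        show ?thesis
        proof (cases "E = {}")
          case True
          then have "emeasure \<mu> E = 0" by simp
          then show ?thesis unfolding E_def by simp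
        next
          case False
          then obtain x0 where x0: "x0 \<in> E" by blast
          then have M0: "frac_maximal \<mu> N \<alpha> f x0 \<le> ennreal (\<epsilon> * t)" by (simp add: E_def)
          define mU where "mU = measure \<mu> UNIV"
          have mU: "mU \<ge> 0" by (simp add: mU_def)
          have A: "(\<integral>\<^sup>+y. ennreal (f y) \<partial>\<mu>) \<le> ennreal (\<epsilon> * t * mU powr \<gamma>)"
            unfolding mU_def using eps t by (intro int_le_global[OF fm fnn M0 _ fin]) auto
          have s: "(1 + CB) * t > 0" using CB_pos t by simp
          have "emeasure \<mu> E \<le> emeasure \<mu> E'" using EE' E'm by (rule emeasure_mono)
          also have "\<dots> \<le> ennreal (CW * ((\<epsilon> * t * mU powr \<gamma>) / ((1 + CB) * t)) powr (real N / \<beta>))"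
            unfolding E'_def by (rule weak_type[OF fm fnn A s])
          also have "CW * ((\<epsilon> * t * mU powr \<gamma>) / ((1 + CB) * t)) powr (real N / \<beta>) \<le> CW * (\<epsilon> * mU powr \<gamma>) powr (real N / \<beta>)"
          proof (intro mult_left_mono powr_mono2)
            have "(\<epsilon> * t * mU powr \<gamma>) / ((1 + CB) * t) = (\<epsilon> * mU powr \<gamma>) / (1 + CB)" using t by simp
            also have "\<dots> \<le> \<epsilon> * mU powr \<gamma>"
              using divide_left_mono[of 1 "1+CB" "\<epsilon> * mU powr \<gamma>"] CB_pos eps mU by simp
            finally show "(\<epsilon> * t * mU powr \<gamma>) / ((1 + CB) * t) \<le> \<epsilon> * mU powr \<gamma>" .
          qed (use CL_pos beta_pos eps t CB_pos in \<open>auto simp: CW_def\<close>)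
          also have "(\<epsilon> * mU powr \<gamma>) powr (real N / \<beta>) = \<epsilon> powr (real N / \<beta>) * mU"
          proof -
            have "(\<epsilon> * mU powr \<gamma>) powr (real N / \<beta>) = \<epsilon> powr (real N / \<beta>) * (mU powr \<gamma>) powr (real N / \<beta>)"
              by (rule powr_mult)
            also have "(mU powr \<gamma>) powr (real N / \<beta>) = mU powr 1"
              using beta_pos N1 by (simp add: powr_powr)
            also have "mU powr 1 = mU" using mU by (rule powr_one)
            finally show ?thesis .
          qed
          also have "CW * (\<epsilon> powr (real N / \<beta>) * mU) \<le> CW * Kd * \<epsilon> powr (real N / \<beta>) * mU"
          proof -
            have "CW * (\<epsilon> powr (real N / \<beta>) * mU) = 1 * (CW * \<epsilon> powr (real N / \<beta>) * mU)" by simp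
            also have "\<dots> \<le> Kd * (CW * \<epsilon> powr (real N / \<beta>) * mU)"
              using Kd_ge1 CL_pos mU by (intro mult_right_mono) (auto simp: CW_def)
            finally show ?thesis by (simp add: algebra_simps)
          qed
          also have "ennreal (CW * Kd * \<epsilon> powr (real N / \<beta>) * mU) = ennreal ?Cc * emeasure \<mu> ?Om"
            using Ccpos fin OmU by (simp add: Om_def[symmetric] ennreal_mult mU_def emeasure_eq_ennreal_measure less_top)
          finally show ?thesis by (simp add: E_def ennreal_leI)
        qed
      qed
    next
      case False
      then obtain z0 where z0: "z0 \<in> Oc" by blast
      define Ek where "Ek n = E \<inter> ball 0 (real n)" for n :: nat
      have Ekm: "range Ek \<subseteq> sets \<mu>" using Em by (auto simp: Ek_def)
      have Ekinc: "incseq Ek" unfolding incseq_def Ek_def by auto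
      have UEk: "(\<Union>n. Ek n) = E"
      proof safe
        fix y assume "y \<in> E"
        obtain n :: nat where "norm y < real n" using reals_Archimedean2 by blast
        then show "y \<in> (\<Union>n. Ek n)" using \<open>y \<in> E\<close> by (auto simp: Ek_def)
      qed (auto simp: Ek_def)
      have "emeasure \<mu> E = (SUP n. emeasure \<mu> (Ek n))"
        using SUP_emeasure_incseq[OF Ekm Ekinc] UEk by simp
      also have "\<dots> \<le> ennreal ?Cc * emeasure \<mu> Om"
      proof (rule SUP_least)
        fix n :: nat
        have loc: "\<forall>x\<in>Ek n. \<exists>\<rho>>0. \<rho> \<le> infdist x Oc \<and> (\<exists>G\<in>sets \<mu>. E' \<inter> ball x (5 * \<rho>) \<subseteq> G \<and>
           emeasure \<mu> G \<le> ennreal ?Cc * emeasure \<mu> (ball x \<rho>))"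
        proof
          fix x assume "x \<in> Ek n"
          then have xE: "x \<in> E" by (simp add: Ek_def)
          show "\<exists>\<rho>>0. \<rho> \<le> infdist x Oc \<and> (\<exists>G\<in>sets \<mu>. E' \<inter> ball x (5 * \<rho>) \<subseteq> G \<and>
           emeasure \<mu> G \<le> ennreal ?Cc * emeasure \<mu> (ball x \<rho>))"
            by (rule local_est[OF fm fnn t eps _ _ Oc_def False E'_def]) (use xE in \<open>auto simp: E_def\<close>)
        qed
        then obtain \<rho> where \<rho>: "\<forall>x\<in>Ek n. \<rho> x > 0 \<and> \<rho> x \<le> infdist x Oc \<and> (\<exists>G\<in>sets \<mu>. E' \<inter> ball x (5 * \<rho> x) \<subseteq> G \<and>
           emeasure \<mu> G \<le> ennreal ?Cc * emeasure \<mu> (ball x (\<rho> x)))"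
          by metis
        then obtain G where G: "\<forall>x\<in>Ek n. G x \<in> sets \<mu> \<and> E' \<inter> ball x (5 * \<rho> x) \<subseteq> G x \<and>
           emeasure \<mu> (G x) \<le> ennreal ?Cc * emeasure \<mu> (ball x (\<rho> x))"
          by metis
        have rbound: "\<rho> x \<le> real n + norm z0" if "x \<in> Ek n" for x
        proof -
          have "\<rho> x \<le> infdist x Oc" using \<rho> that by blast
          also have "\<dots> \<le> dist x z0" using z0 by (rule infdist_le)
          also have "\<dots> \<le> norm x + norm z0" by (simp add: dist_norm norm_triangle_ineq4)
          also have "norm x \<le> real n" using that by (auto simp: Ek_def)
          finally show ?thesis by simp
        qed
        obtain C where C: "countable C" "C \<subseteq> Ek n"
          "pairwise (\<lambda>i j. disjnt (ball i (\<rho> i)) (ball j (\<rho> j))) C"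
          "Ek n \<subseteq> (\<Union>i\<in>C. ball i (5 * \<rho> i))"
        proof (rule Vitali_covering_lemma_balls[where S="Ek n" and K="Ek n" and a="\<lambda>x. x" and r=\<rho> and B="real n + norm z0"])
          show "Ek n \<subseteq> (\<Union>i\<in>Ek n. ball i (\<rho> i))" using \<rho> by force
          show "\<And>i. i \<in> Ek n \<Longrightarrow> 0 < \<rho> i \<and> \<rho> i \<le> real n + norm z0" using \<rho> rbound by blast
        qed auto
        have cov: "Ek n \<subseteq> (\<Union>c\<in>C. G c)"
        proof
          fix y assume y: "y \<in> Ek n"
          then obtain c where c: "c \<in> C" "y \<in> ball c (5 * \<rho> c)" using C(4) by blast
          have "y \<in> E'" using y EE' by (auto simp: Ek_def)
          then have "y \<in> G c" using G c C(2) by blast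
          then show "y \<in> (\<Union>c\<in>C. G c)" using c by blast
        qed
        have Um: "(\<Union>c\<in>C. G c) \<in> sets \<mu>" using C G by (intro sets.countable_UN'') auto
        have "emeasure \<mu> (Ek n) \<le> emeasure \<mu> (\<Union>c\<in>C. G c)" using cov Um by (rule emeasure_mono)
        also have "\<dots> \<le> ennreal ?Cc * emeasure \<mu> Om"
        proof (rule countable_cover_bound[where B="\<lambda>c. ball c (\<rho> c)"])
          show "disjoint_family_on (\<lambda>c. ball c (\<rho> c)) C"
            using C(3) by (auto simp: pairwise_def disjnt_def disjoint_family_on_def)
          show "ball c (\<rho> c) \<subseteq> Om" if "c \<in> C" for c
            using ball_sub_Omega[of "\<rho> c" c Oc] \<rho> C(2) that OmOc by blast
        qed (use C G Omm in auto)
        finally show "emeasure \<mu> (Ek n) \<le> ennreal ?Cc * emeasure \<mu> Om" .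
      qed
      finally show ?thesis by (simp add: E_def Om_def)
    qed
  qed
qed

end

theorem mainTheorem1:
  fixes \<mu> :: "'a::euclidean_space measure" and N :: nat and \<alpha> :: real
  assumes "N \<ge> 1" and "0 < \<alpha>" and "\<alpha> < real N"
    and "sets \<mu> = sets borel"
    and "\<And>K. compact K \<Longrightarrow> emeasure \<mu> K < \<infinity>"
    and "\<exists>C\<^sub>\<mu>. \<forall>x r. r > 0 \<longrightarrow> emeasure \<mu> (ball x r) \<le> ennreal (C\<^sub>\<mu> * r ^ N)"
  shows "\<exists>k C. k \<ge> 1 \<and> C \<ge> 0 \<and>
    (\<forall>f t \<epsilon>. f \<in> borel_measurable \<mu> \<and> (\<forall>y. f y \<ge> 0) \<and> t > 0 \<and> 0 < \<epsilon> \<and> \<epsilon> \<le> 1 \<longrightarrow>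
       emeasure \<mu> {x. riesz_potential \<mu> N \<alpha> f x > ennreal (k * t)
                     \<and> frac_maximal \<mu> N \<alpha> f x \<le> ennreal (\<epsilon> * t)}
       \<le> ennreal (C * \<epsilon> powr (real N / (real N - \<alpha>)))
          * emeasure \<mu> {x. riesz_potential \<mu> N \<alpha> f x > ennreal t})"
proof -
  obtain C0 where C0: "\<forall>x r. r > 0 \<longrightarrow> emeasure \<mu> (ball x r) \<le> ennreal (C0 * r ^ N)"
    using assms(6) by blast
  define Cm where "Cm = max C0 1"
  interpret G: growth \<mu> N \<alpha> Cm
  proof
    show "0 < Cm" by (simp add: Cm_def)
    fix x :: 'a and r :: real assume r: "r > 0"
    have "emeasure \<mu> (ball x r) \<le> ennreal (C0 * r ^ N)" using C0 r by blast
    also have "\<dots> \<le> ennreal (Cm * r ^ N)"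
      using r by (intro ennreal_leI mult_right_mono) (auto simp: Cm_def)
    finally show "emeasure \<mu> (ball x r) \<le> ennreal (Cm * r ^ N)" .
  qed (use assms in auto)
  have A: "1 \<le> 1 + G.CB" using G.CB_pos by simp
  have B: "0 \<le> G.CW * G.Kd" using G.CL_pos G.Kd_pos by (simp add: G.CW_def)
  have Cc: "\<forall>f t \<epsilon>. f \<in> borel_measurable \<mu> \<and> (\<forall>y. f y \<ge> 0) \<and> t > 0 \<and> 0 < \<epsilon> \<and> \<epsilon> \<le> 1 \<longrightarrow>
       emeasure \<mu> {x. riesz_potential \<mu> N \<alpha> f x > ennreal ((1 + G.CB) * t)
                     \<and> frac_maximal \<mu> N \<alpha> f x \<le> ennreal (\<epsilon> * t)}
       \<le> ennreal (G.CW * G.Kd * \<epsilon> powr (real N / (real N - \<alpha>)))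
          * emeasure \<mu> {x. riesz_potential \<mu> N \<alpha> f x > ennreal t}"
  proof (intro allI impI)
    fix f :: "'a \<Rightarrow> real" and t \<epsilon> :: real
    assume h: "f \<in> borel_measurable \<mu> \<and> (\<forall>y. f y \<ge> 0) \<and> t > 0 \<and> 0 < \<epsilon> \<and> \<epsilon> \<le> 1"
    have fm: "f \<in> borel_measurable borel"
      using h measurable_cong_sets[OF assms(4) refl] by blast
    show "emeasure \<mu> {x. riesz_potential \<mu> N \<alpha> f x > ennreal ((1 + G.CB) * t)
                     \<and> frac_maximal \<mu> N \<alpha> f x \<le> ennreal (\<epsilon> * t)}
       \<le> ennreal (G.CW * G.Kd * \<epsilon> powr (real N / (real N - \<alpha>)))
          * emeasure \<mu> {x. riesz_potential \<mu> N \<alpha> f x > ennreal t}"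
      unfolding G.riesz_eq using G.main_loc[OF fm] h by blast
  qed
  show ?thesis
    by (rule exI[of _ "1 + G.CB"], rule exI[of _ "G.CW * G.Kd"]) (use A B Cc in blast)
qed

end
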